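(* Let $n$ be a positive integer and $X\subseteq\mathbb{Z}_n$ a set of size $m>0$. There exists a partial coloring $\chi:X\to\{-1,0,1\}$ with $\chi(x)\in\{1,-1\}$ for at least $m/10$ elements $x\in X$ such that \[\max_{A\in\mathcal A_n}|\chi(A\cap X)|\le 200\, m^{1/2}\left(\log\frac{en}{m}\right)^{1/2}.\]
   Context: For a positive integer $n$, an arithmetic progression in $\mathbb{Z}_n$ is a set $\{a+kd: 0\le k<l\}$ with $a,d\in\mathbb{Z}_n$ and $l$ an integer with $0\le l\le n/\gcd(n,d)$ (here $\gcd(d,n)$ is computed for any integer representative of $d$, so $\gcd(0,n)=n$). $\mathcal A_n$ denotes the family of all arithmetic progressions in $\mathbb{Z}_n$. For a function $\chi$ defined on a set containing $B$, $\chi(B)=\sum_{x\in B}\chi(x)$. Logarithms are natural. *)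

theory Defs
  imports "HOL-Analysis.Analysis"
begin

text \<open>Z_n is represented by the residues {0..<n} (naturals), arithmetic taken mod n.
  An arithmetic progression {a + k d : 0 <= k < l} with a, d in Z_n and
  0 <= l <= n / gcd(n,d).\<close>

definition arith_prog :: "nat \<Rightarrow> nat \<Rightarrow> nat \<Rightarrow> nat \<Rightarrow> nat set" where
  "arith_prog n a d l = {(a + k * d) mod n | k. k < l}"

definition APs :: "nat \<Rightarrow> nat set set" where
  "APs n = {arith_prog n a d l | a d l. a < n \<and> d < n \<and> l * gcd n d \<le> n}"

end

theory Submission
  imports Defs "HOL-Probability.Hoeffding"
begin

lemma cosh_bound_nonneg:
  fixes a :: real assumes "a \<ge> 0"
  shows "exp a + exp (-a) \<le> 2 * exp (a^2/2)"
proof -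
  have "-(2*a) * (1/2) + ln (1 + (1/2) * (exp (2*a) - 1)) \<le> (2*a)^2/8"
    using Hoeffdings_lemma_aux[of "2*a" "1/2"] assms by simp
  hence "ln ((1 + exp (2*a))/2) \<le> a + a^2/2"
    by (simp add: power2_eq_square field_simps)
  hence "(1 + exp (2*a))/2 \<le> exp (a + a^2/2)"
    by (smt (verit) exp_gt_zero exp_le_cancel_iff exp_ln)
  hence "exp (-a) * ((1 + exp (2*a))/2) \<le> exp (-a) * exp (a + a^2/2)"
    by (intro mult_left_mono) auto
  moreover have "exp (-a) * ((1 + exp (2*a))/2) = (exp a + exp (-a))/2"
    by (simp add: field_simps flip: exp_add)
  moreover have "exp (-a) * exp (a + a^2/2) = exp (a^2/2)"
    by (simp flip: exp_add)
  ultimately show ?thesis by simp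
qed

lemma cosh_bound:
  fixes a :: real
  shows "exp a + exp (-a) \<le> 2 * exp (a^2/2)"
proof (cases "a \<ge> 0")
  case True thus ?thesis by (rule cosh_bound_nonneg)
next
  case False
  thus ?thesis using cosh_bound_nonneg[of "-a"] by simp
qed

definition colorings :: "nat set \<Rightarrow> (nat \<Rightarrow> int) set" where
  "colorings X = PiE X (\<lambda>_. {-1,1})"

lemma card_colorings: "finite X \<Longrightarrow> card (colorings X) = 2 ^ card X"
  by (simp add: colorings_def card_PiE numeral_2_eq_2)

lemma finite_colorings: "finite X \<Longrightarrow> finite (colorings X)"
  by (simp add: colorings_def finite_PiE)

lemma chernoff_mgf:
  fixes w :: "nat \<Rightarrow> real" and \<theta> :: real
  assumes X: "finite X"
  shows "(\<Sum>c\<in>colorings X. exp (\<theta> * (\<Sum>x\<in>X. w x * c x)))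
          \<le> 2 ^ card X * exp (\<theta>^2 * (\<Sum>x\<in>X. (w x)^2) / 2)"
proof -
  have "(\<Sum>c\<in>colorings X. exp (\<theta> * (\<Sum>x\<in>X. w x * c x)))
      = (\<Sum>c\<in>colorings X. \<Prod>x\<in>X. exp (\<theta> * w x * c x))"
    using X by (simp add: exp_sum sum_distrib_left mult.assoc)
  also have "\<dots> = (\<Prod>x\<in>X. \<Sum>s\<in>{-1,1::int}. exp (\<theta> * w x * s))"
    unfolding colorings_def using X by (subst prod_sum_PiE) auto
  also have "\<dots> = (\<Prod>x\<in>X. exp (\<theta> * w x) + exp (-(\<theta> * w x)))"
    by (intro prod.cong) auto
  also have "\<dots> \<le> (\<Prod>x\<in>X. 2 * exp ((\<theta> * w x)^2/2))"
    by (intro prod_mono) (auto intro: cosh_bound add_nonneg_nonneg)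
  also have "\<dots> = 2 ^ card X * exp (\<theta>^2 * (\<Sum>x\<in>X. (w x)^2) / 2)"
    using X by (simp add: prod.distrib exp_sum sum_distrib_left sum_divide_distrib power_mult_distrib)
  finally show ?thesis .
qed

lemma entropy_pigeon:
  fixes \<Omega> :: "'a set" and f :: "'a \<Rightarrow> 'i \<Rightarrow> int" and u :: "'i \<Rightarrow> int \<Rightarrow> real"
    and K :: "'i \<Rightarrow> int set" and I :: "'i set" and T :: real
  assumes fin: "finite \<Omega>" and ne: "\<Omega> \<noteq> {}" and finI: "finite I"
    and finK: "\<And>i. i \<in> I \<Longrightarrow> finite (K i)"
    and fK: "\<And>c. c \<in> \<Omega> \<Longrightarrow> f c \<in> PiE I K"
    and upos: "\<And>i k. i \<in> I \<Longrightarrow> k \<in> K i \<Longrightarrow> u i k > 0"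
    and usum: "\<And>i. i \<in> I \<Longrightarrow> (\<Sum>k\<in>K i. u i k) \<le> 1"
    and cost: "(\<Sum>c\<in>\<Omega>. \<Sum>i\<in>I. - ln (u i (f c i))) \<le> card \<Omega> * T"
  shows "\<exists>c0\<in>\<Omega>. real (card {c\<in>\<Omega>. f c = f c0}) \<ge> card \<Omega> * exp (-T)"
proof (rule ccontr)
  assume contra: "\<not> ?thesis"
  define cnt where "cnt c = card {c'\<in>\<Omega>. f c' = f c}" for c
  define U where "U \<beta> = (\<Prod>i\<in>I. u i (\<beta> i))" for \<beta>
  have cntpos: "cnt c \<ge> 1" if "c \<in> \<Omega>" for c
  proof -
    have "{c'\<in>\<Omega>. f c' = f c} \<noteq> {}" using that by auto
    thus ?thesis unfolding cnt_def using fin by (simp add: Suc_le_eq card_gt_0_iff)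
  qed
  have Upos: "U (f c) > 0" if "c \<in> \<Omega>" for c
    unfolding U_def using fK[OF that] upos by (intro prod_pos) (auto simp: PiE_def Pi_def)
  have A: "(\<Sum>c\<in>\<Omega>. U (f c) / cnt c) \<le> 1"
  proof -
    have "(\<Sum>c\<in>\<Omega>. U (f c) / cnt c) = (\<Sum>\<beta>\<in>f ` \<Omega>. \<Sum>c\<in>{c\<in>\<Omega>. f c = \<beta>}. U (f c) / cnt c)"
      using fin by (rule sum.image_gen)
    also have "\<dots> = (\<Sum>\<beta>\<in>f ` \<Omega>. U \<beta>)"
    proof (intro sum.cong refl)
      fix \<beta> assume "\<beta> \<in> f ` \<Omega>"
      then obtain c0 where c0: "c0 \<in> \<Omega>" "\<beta> = f c0" by auto
      have "(\<Sum>c\<in>{c\<in>\<Omega>. f c = \<beta>}. U (f c) / cnt c) = (\<Sum>c\<in>{c\<in>\<Omega>. f c = \<beta>}. U \<beta> / cnt c0)"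
        by (intro sum.cong) (auto simp: cnt_def c0)
      also have "\<dots> = U \<beta>"
        using cntpos[OF c0(1)] by (simp add: cnt_def c0)
      finally show "(\<Sum>c\<in>{c\<in>\<Omega>. f c = \<beta>}. U (f c) / cnt c) = U \<beta>" .
    qed
    also have "\<dots> \<le> (\<Sum>\<beta>\<in>PiE I K. U \<beta>)"
    proof (rule sum_mono2)
      show "finite (PiE I K)" using finI finK by (simp add: finite_PiE)
      show "f ` \<Omega> \<subseteq> PiE I K" using fK by auto
      show "0 \<le> U b" if "b \<in> PiE I K - f ` \<Omega>" for b
        unfolding U_def using that upos by (intro prod_nonneg) (force simp: PiE_def Pi_def)
    qed
    also have "\<dots> = (\<Prod>i\<in>I. \<Sum>k\<in>K i. u i k)"
      unfolding U_def using finI finK by (subst prod_sum_PiE) auto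
    also have "\<dots> \<le> (\<Prod>i\<in>I. 1)"
    proof (rule prod_mono)
      fix i assume i: "i \<in> I"
      have "0 \<le> (\<Sum>k\<in>K i. u i k)" by (rule sum_nonneg) (use upos i in force)
      thus "0 \<le> (\<Sum>k\<in>K i. u i k) \<and> (\<Sum>k\<in>K i. u i k) \<le> 1" using usum i by simp
    qed
    finally show ?thesis by simp
  qed
  have B: "ln (card \<Omega> * U (f c) / cnt c) \<le> card \<Omega> * U (f c) / cnt c - 1" if "c \<in> \<Omega>" for c
    using Upos[OF that] cntpos[OF that] ne fin
    by (intro ln_le_minus_one) (auto intro!: divide_pos_pos mult_pos_pos simp: card_gt_0_iff)
  have C: "ln (card \<Omega> * U (f c) / cnt c) = ln (card \<Omega>) - ln (cnt c) + (\<Sum>i\<in>I. ln (u i (f c i)))"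
    if "c \<in> \<Omega>" for c
  proof -
    have "ln (U (f c)) = (\<Sum>i\<in>I. ln (u i (f c i)))"
      unfolding U_def using fK[OF that] upos finI by (subst ln_prod) (force simp: PiE_def Pi_def)+
    thus ?thesis using Upos[OF that] cntpos[OF that] ne fin
      by (simp add: ln_div ln_mult card_gt_0_iff)
  qed
  have "(\<Sum>c\<in>\<Omega>. ln (card \<Omega> * U (f c) / cnt c)) \<le> (\<Sum>c\<in>\<Omega>. card \<Omega> * U (f c) / cnt c - 1)"
    using B by (intro sum_mono) auto
  also have "\<dots> = card \<Omega> * (\<Sum>c\<in>\<Omega>. U (f c) / cnt c) - card \<Omega>"
    by (simp add: sum_subtractf sum_distrib_left)
  also have "\<dots> \<le> 0" using A by (simp add: mult_left_le)
  finally have D: "(\<Sum>c\<in>\<Omega>. ln (card \<Omega>) - ln (cnt c)) \<le> (\<Sum>c\<in>\<Omega>. \<Sum>i\<in>I. - ln (u i (f c i)))"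
    using C by (simp add: sum.distrib sum_negf)
  have E: "ln (card \<Omega>) - ln (cnt c) > T" if "c \<in> \<Omega>" for c
  proof -
    have "real (cnt c) < card \<Omega> * exp (-T)" using contra that by (auto simp: cnt_def not_le)
    hence "ln (cnt c) < ln (card \<Omega> * exp (-T))"
      using cntpos[OF that] by (intro ln_less_cancel_iff[THEN iffD2]) auto
    also have "\<dots> = ln (card \<Omega>) - T" using ne fin by (simp add: ln_mult card_gt_0_iff)
    finally show ?thesis by simp
  qed
  have "(\<Sum>c\<in>\<Omega>. T) < (\<Sum>c\<in>\<Omega>. ln (card \<Omega>) - ln (cnt c))"
    using E fin ne by (intro sum_strict_mono) auto
  with D cost show False by simp
qed

lemma geom_half_nat_sum:
  fixes S :: "nat set" assumes "finite S"
  shows "(\<Sum>n\<in>S. (1/2::real) ^ n) \<le> 2"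
proof -
  obtain N where N: "\<And>n. n \<in> S \<Longrightarrow> n < N"
    using assms finite_nat_set_iff_bounded by auto
  have "(\<Sum>n\<in>S. (1/2::real) ^ n) \<le> (\<Sum>n<N. (1/2::real) ^ n)"
    using N by (intro sum_mono2) auto
  also have "\<dots> = 2 * (1 - (1/2)^N)" by (simp add: sum_gp_strict)
  also have "\<dots> \<le> 2" by simp
  finally show ?thesis .
qed

lemma geom_half_int_sum:
  fixes F :: "int set" assumes "finite F"
  shows "(\<Sum>k\<in>F - {0}. (1/2::real) ^ nat \<bar>k\<bar>) \<le> 4"
proof -
  have split: "F - {0} = {k\<in>F. k > 0} \<union> {k\<in>F. k < 0}" by auto
  have "(\<Sum>k\<in>F - {0}. (1/2::real) ^ nat \<bar>k\<bar>)
      = (\<Sum>k\<in>{k\<in>F. k > 0}. (1/2::real) ^ nat \<bar>k\<bar>) + (\<Sum>k\<in>{k\<in>F. k < 0}. (1/2::real) ^ nat \<bar>k\<bar>)"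
    unfolding split using assms by (intro sum.union_disjoint) auto
  also have "(\<Sum>k\<in>{k\<in>F. k > 0}. (1/2::real) ^ nat \<bar>k\<bar>) = (\<Sum>n\<in>(\<lambda>k. nat \<bar>k\<bar>) ` {k\<in>F. k > 0}. (1/2::real) ^ n)"
    by (subst sum.reindex) (auto simp: inj_on_def)
  also have "\<dots> \<le> 2" using assms by (intro geom_half_nat_sum) auto
  also have "(\<Sum>k\<in>{k\<in>F. k < 0}. (1/2::real) ^ nat \<bar>k\<bar>) = (\<Sum>n\<in>(\<lambda>k. nat \<bar>k\<bar>) ` {k\<in>F. k < 0}. (1/2::real) ^ n)"
    by (subst sum.reindex) (auto simp: inj_on_def)
  also have "\<dots> \<le> 2" using assms by (intro geom_half_nat_sum) auto
  finally show ?thesis by simp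
qed

lemma exp_quad_bound:
  fixes t :: real assumes "t \<ge> 20"
  shows "10 + 4 * t \<le> exp t"
proof -
  have e: "exp t = exp (t/2) ^ 2" by (simp flip: exp_of_nat_mult)
  have h1: "1 + t/2 \<le> exp (t/2)" by (rule exp_ge_add_one_self)
  have h0: "0 \<le> 1 + t/2" using assms by simp
  have sq: "(1 + t/2)^2 \<le> exp t"
    using power_mono[OF h1 h0, of 2] e by simp
  have "(14::real)^2 \<le> (t-6)^2" using assms by (intro power_mono) auto
  hence "10 + 4 * t \<le> (1 + t/2)^2"
    by (simp add: power2_eq_square algebra_simps)
  with sq show ?thesis by linarith
qed

lemma round_bound:
  fixes L D :: real assumes D: "D > 0" and b: "\<lfloor>L/(2*D) + 1/2\<rfloor> \<noteq> 0"
  shows "D * \<bar>of_int \<lfloor>L/(2*D) + 1/2\<rfloor>\<bar> \<le> \<bar>L\<bar>"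
proof -
  define b where "b = \<lfloor>L/(2*D) + 1/2\<rfloor>"
  have f: "of_int b \<le> L/(2*D) + 1/2" "L/(2*D) + 1/2 < of_int b + 1"
    unfolding b_def using floor_correct[of "L/(2*D) + 1/2"] by auto
  have f1: "2 * D * of_int b \<le> L + D" using f(1) D by (simp add: field_simps)
  have f2: "L + D < 2*D*(of_int b + 1)" using f(2) D by (simp add: field_simps)
  show ?thesis
  proof (cases "b > 0")
    case True
    hence "of_int b \<ge> (1::real)" by simp
    hence "D * 1 \<le> D * of_int b" using D by (intro mult_left_mono) auto
    hence "D * of_int b \<le> L" using f1 by linarith
    thus ?thesis using True unfolding b_def by simp
  next
    case False
    have "b \<noteq> 0" using b b_def by simp
    hence "b < 0" using False by simp
    hence "of_int b \<le> (-1::real)" by simp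
    hence "D * of_int b \<le> D * (-1)" using D by (intro mult_left_mono) auto
    hence "L \<le> D * of_int b" using f2 by (simp add: algebra_simps)
    thus ?thesis using \<open>b < 0\<close> unfolding b_def by simp
  qed
qed

lemma round_diff:
  fixes L1 L2 D :: real assumes D: "D > 0"
    and e: "\<lfloor>L1/(2*D) + 1/2\<rfloor> = \<lfloor>L2/(2*D) + 1/2\<rfloor>"
  shows "\<bar>L1 - L2\<bar> < 2 * D"
proof -
  define b where "b = \<lfloor>L1/(2*D) + 1/2\<rfloor>"
  have f: "of_int b \<le> L1/(2*D) + 1/2" "L1/(2*D) + 1/2 < of_int b + 1"
    "of_int b \<le> L2/(2*D) + 1/2" "L2/(2*D) + 1/2 < of_int b + 1"
    unfolding b_def using floor_correct[of "L1/(2*D) + 1/2"] floor_correct[of "L2/(2*D) + 1/2"] e by auto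
  hence "\<bar>L1/(2*D) - L2/(2*D)\<bar> < 1" by linarith
  hence "\<bar>L1 - L2\<bar> / (2*D) < 1" using D by (simp add: diff_divide_distrib[symmetric] abs_divide)
  thus ?thesis using D by (simp add: field_simps)
qed

lemma neg_ln_one_minus:
  fixes e :: real assumes "0 \<le> e" "e \<le> 1/2"
  shows "- ln (1 - e) \<le> 2 * e"
proof -
  have "- ln (1 - e) = ln (1 / (1 - e))" using assms by (simp add: ln_div)
  also have "\<dots> \<le> 1/(1-e) - 1" using assms by (intro ln_le_minus_one) auto
  also have "\<dots> = e/(1-e)" using assms by (simp add: field_simps)
  also have "\<dots> \<le> e / (1/2)" using assms by (intro divide_left_mono) auto
  also have "\<dots> = 2 * e" by simp
  finally show ?thesis .
qed

lemma cost_bound: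
  fixes X :: "nat set" and w :: "nat \<Rightarrow> real" and D V :: real
  assumes X: "finite X" and V: "V > 0" and wV: "(\<Sum>x\<in>X. (w x)^2) \<le> V" and D: "D > 0"
    and DV: "D^2 \<ge> 80 * V"
  shows "(\<Sum>c\<in>colorings X.
            - ln ((\<lambda>k::int. if k = 0 then 1 - exp (-(D^2/V)/2)
                   else exp (-(D^2/V)/2) / 4 * (1/2) ^ nat \<bar>k\<bar>)
                  \<lfloor>(\<Sum>x\<in>X. w x * c x)/(2*D) + 1/2\<rfloor>))
         \<le> 2 ^ card X * exp (-(D^2/V)/4)"
proof -
  define lam2 where "lam2 = D^2/V"
  define eps where "eps = exp (-lam2/2)"
  define L where "L c = (\<Sum>x\<in>X. w x * c x)" for c :: "nat \<Rightarrow> int"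
  define u where "u k = (if k = 0 then 1 - eps else eps / 4 * (1/2) ^ nat \<bar>k\<bar>)" for k :: int
  define \<theta> where "\<theta> = D / V"
  define \<alpha> where "\<alpha> = 3 + lam2/2"
  have lam80: "lam2 \<ge> 80" using DV V unfolding lam2_def by (simp add: field_simps)
  have epspos: "eps > 0" unfolding eps_def by simp
  have epssmall: "eps \<le> 1/2"
  proof -
    have "1 + lam2/2 \<le> exp (lam2/2)" by (rule exp_ge_add_one_self)
    hence "2 \<le> exp (lam2/2)" using lam80 by linarith
    thus ?thesis unfolding eps_def by (simp add: exp_minus field_simps)
  qed
  have pw: "- ln (u (\<lfloor>L c/(2*D) + 1/2\<rfloor>)) \<le> 2*eps + (\<alpha>+1) * exp (\<theta> * \<bar>L c\<bar> - lam2)" for c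
  proof (cases "\<lfloor>L c/(2*D) + 1/2\<rfloor> = 0")
    case True
    hence "- ln (u (\<lfloor>L c/(2*D) + 1/2\<rfloor>)) = - ln (1 - eps)" unfolding u_def by simp
    also have "\<dots> \<le> 2*eps" using epspos epssmall by (intro neg_ln_one_minus) auto
    moreover have "0 \<le> (\<alpha>+1) * exp (\<theta> * \<bar>L c\<bar> - lam2)"
      using lam80 unfolding \<alpha>_def by (intro mult_nonneg_nonneg) auto
    ultimately show ?thesis by linarith
  next
    case False
    define b where "b = \<lfloor>L c/(2*D) + 1/2\<rfloor>"
    have bL: "D * \<bar>of_int b\<bar> \<le> \<bar>L c\<bar>" unfolding b_def using round_bound[OF D False] .
    have b1: "\<bar>of_int b\<bar> \<ge> (1::real)" using False unfolding b_def by linarith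
    define y where "y = \<bar>L c\<bar> / D"
    have "D * 1 \<le> D * \<bar>of_int b\<bar>" using b1 D by (intro mult_left_mono) auto
    hence "D \<le> \<bar>L c\<bar>" using bL by linarith
    hence y1: "y \<ge> 1" unfolding y_def using D by (simp add: field_simps)
    have yb: "\<bar>of_int b\<bar> \<le> y" unfolding y_def using D bL by (simp add: field_simps)
    have "- ln (u b) = - ln (eps / 4 * (1/2) ^ nat \<bar>b\<bar>)" using False unfolding u_def b_def by simp
    also have "\<dots> = ln 4 + lam2/2 + nat \<bar>b\<bar> * ln 2"
      using epspos by (simp add: ln_mult ln_div ln_realpow eps_def ln_inverse)
    also have "\<dots> \<le> 3 + lam2/2 + \<bar>of_int b\<bar> * 1"
    proof -
      have "ln (4::real) \<le> 4 - 1" by (rule ln_le_minus_one) auto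
      moreover have "ln (2::real) \<le> 1" using ln_le_minus_one[of 2] by simp
      moreover have "real (nat \<bar>b\<bar>) = \<bar>of_int b\<bar>" by simp
      moreover have "real (nat \<bar>b\<bar>) * ln 2 \<le> real (nat \<bar>b\<bar>) * 1"
        using \<open>ln (2::real) \<le> 1\<close> by (intro mult_left_mono) auto
      ultimately show ?thesis by linarith
    qed
    also have "\<dots> \<le> \<alpha> + y" unfolding \<alpha>_def using yb by simp
    also have "\<dots> \<le> (\<alpha>+1) * exp (lam2 * (y - 1))"
    proof -
      have "1 + lam2*(y-1) \<le> exp (lam2*(y-1))" by (rule exp_ge_add_one_self)
      have "\<alpha> + y \<le> (\<alpha>+1) * (1 + lam2*(y-1))"
      proof -
        have "1*1 \<le> (\<alpha>+1)*lam2" using lam80 unfolding \<alpha>_def by (intro mult_mono) auto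
        hence "(\<alpha>+1)*lam2*(y-1) \<ge> 1*(y-1)"
          using y1 by (intro mult_right_mono) auto
        thus ?thesis by (simp add: algebra_simps)
      qed
      also have "\<dots> \<le> (\<alpha>+1) * exp (lam2*(y-1))"
        using \<open>1 + lam2*(y-1) \<le> exp (lam2*(y-1))\<close> lam80 unfolding \<alpha>_def by (intro mult_left_mono) auto
      finally show ?thesis .
    qed
    also have "lam2 * (y - 1) = \<theta> * \<bar>L c\<bar> - lam2"
      unfolding y_def \<theta>_def lam2_def using D V by (simp add: field_simps power2_eq_square)
    finally show ?thesis unfolding b_def using epspos by simp
  qed
  have mgf: "(\<Sum>c\<in>colorings X. exp (\<theta> * \<bar>L c\<bar>)) \<le> 2 * (2 ^ card X * exp (lam2/2))"
  proof -
    have "(\<Sum>c\<in>colorings X. exp (\<theta> * \<bar>L c\<bar>))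
        \<le> (\<Sum>c\<in>colorings X. exp (\<theta> * L c) + exp ((-\<theta>) * L c))"
      by (intro sum_mono) (auto simp: abs_if)
    also have "\<dots> = (\<Sum>c\<in>colorings X. exp (\<theta> * L c)) + (\<Sum>c\<in>colorings X. exp ((-\<theta>) * L c))"
      by (simp add: sum.distrib)
    also have "\<dots> \<le> 2 ^ card X * exp (\<theta>^2 * (\<Sum>x\<in>X. (w x)^2) / 2) + 2 ^ card X * exp ((-\<theta>)^2 * (\<Sum>x\<in>X. (w x)^2) / 2)"
      unfolding L_def using X by (intro add_mono chernoff_mgf)
    also have "\<dots> \<le> 2 ^ card X * exp (\<theta>^2 * V / 2) + 2 ^ card X * exp (\<theta>^2 * V / 2)"
      using wV by (intro add_mono mult_left_mono) (auto intro: mult_left_mono divide_right_mono)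
    also have "\<theta>^2 * V / 2 = lam2/2"
      unfolding \<theta>_def lam2_def using V by (simp add: field_simps power2_eq_square)
    finally show ?thesis by simp
  qed
  have "(\<Sum>c\<in>colorings X. - ln (u (\<lfloor>L c/(2*D) + 1/2\<rfloor>)))
      \<le> (\<Sum>c\<in>colorings X. 2*eps + (\<alpha>+1) * exp (\<theta> * \<bar>L c\<bar> - lam2))"
    by (intro sum_mono pw)
  also have "\<dots> = 2 ^ card X * (2*eps) + (\<alpha>+1) * exp (-lam2) * (\<Sum>c\<in>colorings X. exp (\<theta> * \<bar>L c\<bar>))"
  proof -
    have ed: "exp (\<theta> * \<bar>L c\<bar> - lam2) = exp (-lam2) * exp (\<theta> * \<bar>L c\<bar>)" for c
      by (simp flip: exp_add)
    show ?thesis using X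
      by (simp add: ed sum.distrib sum_distrib_left card_colorings mult.assoc)
  qed
  also have "\<dots> \<le> 2 ^ card X * (2*eps) + (\<alpha>+1) * exp (-lam2) * (2 * (2 ^ card X * exp (lam2/2)))"
    using mgf lam80 unfolding \<alpha>_def by (intro add_left_mono mult_left_mono) auto
  also have "(\<alpha>+1) * exp (-lam2) * (2 * (2 ^ card X * exp (lam2/2))) = 2 ^ card X * (2*(\<alpha>+1)*eps)"
  proof -
    have "exp (-lam2) * exp (lam2/2) = eps" unfolding eps_def by (simp flip: exp_add)
    thus ?thesis by (simp add: algebra_simps)
  qed
  also have "2 ^ card X * (2*eps) + 2 ^ card X * (2*(\<alpha>+1)*eps) = 2 ^ card X * (eps * (10 + lam2))"
    unfolding \<alpha>_def by (simp add: algebra_simps)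
  also have "\<dots> \<le> 2 ^ card X * exp (-lam2/4)"
  proof -
    have "10 + 4*(lam2/4) \<le> exp (lam2/4)" using lam80 by (intro exp_quad_bound) auto
    hence "eps * (10 + lam2) \<le> eps * exp (lam2/4)" using epspos by (intro mult_left_mono) auto
    also have "eps * exp (lam2/4) = exp (-lam2/4)" unfolding eps_def by (simp flip: exp_add)
    finally show ?thesis by simp
  qed
  finally show ?thesis unfolding u_def eps_def lam2_def L_def by simp
qed

lemma sum_pow_card_Pow:
  fixes a :: real assumes "finite F"
  shows "(\<Sum>S\<in>Pow F. a ^ card S) = (1 + a) ^ card F"
  using assms
proof (induction F rule: finite_induct)
  case empty thus ?case by simp
next
  case (insert x F)
  have disj: "Pow F \<inter> insert x ` Pow F = {}" using insert by auto
  have inj: "inj_on (insert x) (Pow F)" using insert by (auto simp: inj_on_def)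
  have "(\<Sum>S\<in>Pow (insert x F). a ^ card S) = (\<Sum>S\<in>Pow F. a ^ card S) + (\<Sum>S\<in>insert x ` Pow F. a ^ card S)"
    unfolding Pow_insert using insert disj by (intro sum.union_disjoint) auto
  also have "(\<Sum>S\<in>insert x ` Pow F. a ^ card S) = (\<Sum>S\<in>Pow F. a ^ card (insert x S))"
    using inj by (simp add: sum.reindex)
  also have "\<dots> = (\<Sum>S\<in>Pow F. a * a ^ card S)"
  proof (intro sum.cong refl)
    fix S assume "S \<in> Pow F"
    hence "finite S" "x \<notin> S" using insert finite_subset by auto
    thus "a ^ card (insert x S) = a * a ^ card S" by simp
  qed
  finally show ?case using insert by (simp add: sum_distrib_left[symmetric] algebra_simps)
qed

lemma ball_count:
  fixes X :: "nat set" and c0 :: "nat \<Rightarrow> int"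
  assumes X: "finite X" "card X > 0" and c0: "c0 \<in> colorings X"
  shows "real (card {c\<in>colorings X. real (card {x\<in>X. c0 x \<noteq> c x}) < card X / 10})
         < 2 ^ card X * exp (- (card X / 10))"
proof -
  define m where "m = card X"
  have mpos: "m > 0" using X m_def by simp
  define h where "h c = {x\<in>X. c0 x \<noteq> c x}" for c :: "nat \<Rightarrow> int"
  have inj: "inj_on h (colorings X)"
  proof (rule inj_onI)
    fix c c' assume c: "c \<in> colorings X" and c': "c' \<in> colorings X" and e: "h c = h c'"
    show "c = c'"
    proof (rule extensionalityI[where A = X])
      show "c \<in> extensional X" "c' \<in> extensional X" using c c' by (auto simp: colorings_def PiE_def)
      fix x assume x: "x \<in> X"
      have v: "c x \<in> {-1,1}" "c' x \<in> {-1,1}" "c0 x \<in> {-1,1}"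
        using c c' c0 x by (auto simp: colorings_def PiE_def Pi_def)
      have "(c0 x \<noteq> c x) = (c0 x \<noteq> c' x)" using e x unfolding h_def by blast
      thus "c x = c' x" using v by auto
    qed
  qed
  have "card {c\<in>colorings X. real (card (h c)) < m / 10}
        = card (h ` {c\<in>colorings X. real (card (h c)) < m / 10})"
    using inj by (intro card_image[symmetric]) (auto intro: inj_on_subset)
  also have "\<dots> \<le> card {S\<in>Pow X. real (card S) < m / 10}"
    using X by (intro card_mono) (auto simp: h_def)
  finally have c1: "real (card {c\<in>colorings X. real (card (h c)) < m / 10}) \<le> card {S\<in>Pow X. real (card S) < m / 10}"
    by linarith
  have "real (card {S\<in>Pow X. real (card S) < m / 10}) = (\<Sum>S\<in>{S\<in>Pow X. real (card S) < m / 10}. 1)"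
    by simp
  also have "\<dots> \<le> (\<Sum>S\<in>{S\<in>Pow X. real (card S) < m / 10}. (1/4) ^ card S * 4 powr (m/10))"
  proof (intro sum_mono)
    fix S assume "S \<in> {S\<in>Pow X. real (card S) < m / 10}"
    hence s: "real (card S) < m/10" by simp
    have p1: "(4::real) powr (m/10 - card S) = 4 powr (m/10) / 4 powr (real (card S))"
      by (rule powr_diff)
    have p2: "(4::real) powr (real (card S)) = 4 ^ card S" by (rule powr_realpow) simp
    have "(1/4::real) ^ card S * 4 powr (m/10) = 4 powr (m/10 - card S)"
      unfolding p1 p2 by (simp add: power_one_over)
    also have "\<dots> \<ge> 1" using s by (intro ge_one_powr_ge_zero) auto
    finally show "1 \<le> (1/4::real) ^ card S * 4 powr (m/10)" .
  qed
  also have "\<dots> \<le> (\<Sum>S\<in>Pow X. (1/4) ^ card S * 4 powr (m/10))"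
    using X by (intro sum_mono2) auto
  also have "\<dots> = (5/4) ^ m * 4 powr (m/10)"
    using X by (simp add: sum_distrib_right[symmetric] sum_pow_card_Pow m_def)
  also have "\<dots> < 2 ^ m * exp (- (m / 10))"
  proof -
    have "4 powr (m/10) * exp (m/10) = (4 * exp 1) powr (m/10)"
      by (simp add: powr_def ln_mult add_divide_distrib distrib_left flip: exp_add)
    also have "\<dots> < ((8/5)^10) powr (m/10)"
    proof (rule powr_less_mono2)
      show "0 < real m / 10" using mpos by simp
      show "0 \<le> 4 * exp (1::real)" by simp
      have "(8/5::real)^10 = 1073741824 / 9765625" by (simp add: power_divide)
      thus "4 * exp 1 < ((8/5::real)^10)" using exp_le by simp
    qed
    also have "\<dots> = (8/5) ^ m"
    proof -
      have a: "(8/5::real)^10 = (8/5) powr (real 10)" by (rule powr_realpow[symmetric]) simp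
      have b: "((8/5::real) powr (real 10)) powr (real m / 10) = (8/5) powr (real m)"
        by (simp only: powr_powr) simp
      show ?thesis unfolding a b by (rule powr_realpow) simp
    qed
    finally have "4 powr (m/10) * exp (m/10) < (8/5) ^ m" .
    hence "(5/4) ^ m * (4 powr (m/10) * exp (m/10)) < (5/4)^m * (8/5) ^ m" by simp
    also have "\<dots> = 2 ^ m" by (simp flip: power_mult_distrib)
    finally have "(5/4) ^ m * 4 powr (m/10) * exp (m/10) < 2 ^ m" by (simp add: mult.assoc)
    thus ?thesis by (simp add: exp_minus field_simps)
  qed
  finally show ?thesis using c1 unfolding h_def m_def by linarith
qed

lemma partial_coloring:
  fixes X :: "nat set" and I :: "'i set" and w :: "'i \<Rightarrow> nat \<Rightarrow> real" and D V :: "'i \<Rightarrow> real"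
  assumes X: "finite X" "card X > 0" and I: "finite I"
    and V: "\<And>i. i \<in> I \<Longrightarrow> V i > 0"
    and wV: "\<And>i. i \<in> I \<Longrightarrow> (\<Sum>x\<in>X. (w i x)^2) \<le> V i"
    and D: "\<And>i. i \<in> I \<Longrightarrow> D i > 0"
    and DV: "\<And>i. i \<in> I \<Longrightarrow> (D i)^2 \<ge> 80 * V i"
    and T: "(\<Sum>i\<in>I. exp (-((D i)^2 / V i)/4)) \<le> card X / 10"
  shows "\<exists>col::nat\<Rightarrow>int. (\<forall>x\<in>X. col x \<in> {-1,0,1}) \<and> real (card {x\<in>X. col x \<noteq> 0}) \<ge> card X / 10
           \<and> (\<forall>i\<in>I. \<bar>\<Sum>x\<in>X. w i x * col x\<bar> \<le> D i)"
proof -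
  define \<Omega> where "\<Omega> = colorings X"
  define L where "L i c = (\<Sum>x\<in>X. w i x * c x)" for i and c :: "nat \<Rightarrow> int"
  define bb where "bb i c = \<lfloor>L i c/(2 * D i) + 1/2\<rfloor>" for i c
  define f where "f c = (\<lambda>i\<in>I. bb i c)" for c
  define K where "K i = (\<lambda>c. bb i c) ` \<Omega>" for i
  define eps where "eps i = exp (-((D i)^2/V i)/2)" for i
  define u where "u i k = (if k = 0 then 1 - eps i else eps i / 4 * (1/2) ^ nat \<bar>k\<bar>)" for i and k :: int
  define T where "T = (\<Sum>i\<in>I. exp (-((D i)^2 / V i)/4))"
  have finO: "finite \<Omega>" unfolding \<Omega>_def using X(1) by (rule finite_colorings)
  have cardO: "card \<Omega> = 2 ^ card X" unfolding \<Omega>_def using X(1) by (rule card_colorings)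
  have neO: "\<Omega> \<noteq> {}" using cardO finO by auto
  have eps: "0 < eps i" "eps i \<le> 1/2" if "i \<in> I" for i
  proof -
    show "0 < eps i" unfolding eps_def by simp
    define r where "r = (D i)^2 / V i"
    have "r \<ge> 80" using DV[OF that] V[OF that] unfolding r_def by (simp add: field_simps)
    moreover have "1 + r/2 \<le> exp (r/2)" by (rule exp_ge_add_one_self)
    ultimately have "2 \<le> exp (r/2)" by linarith
    hence "2 \<le> exp ((D i)^2 / V i/2)" unfolding r_def by simp
    thus "eps i \<le> 1/2" unfolding eps_def by (simp add: exp_minus field_simps)
  qed
  have "\<exists>c0\<in>\<Omega>. real (card {c\<in>\<Omega>. f c = f c0}) \<ge> card \<Omega> * exp (-T)"
  proof (rule entropy_pigeon[where u = u and K = K and I = I])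
    show "finite \<Omega>" "\<Omega> \<noteq> {}" "finite I" by (fact finO neO I)+
    show "finite (K i)" for i unfolding K_def using finO by simp
    show "f c \<in> PiE I K" if "c \<in> \<Omega>" for c unfolding f_def K_def using that by auto
    show "u i k > 0" if "i \<in> I" for i k unfolding u_def using eps[OF that] by auto
    show "(\<Sum>k\<in>K i. u i k) \<le> 1" if i: "i \<in> I" for i
    proof -
      have fK: "finite (K i)" unfolding K_def using finO by simp
      have "(\<Sum>k\<in>K i. u i k) = (\<Sum>k\<in>K i \<inter> {0}. u i k) + (\<Sum>k\<in>K i - {0}. u i k)"
        using fK by (metis sum.Int_Diff)
      also have "(\<Sum>k\<in>K i \<inter> {0}. u i k) \<le> 1 - eps i"
        using eps[OF i] by (cases "0 \<in> K i") (auto simp: u_def Int_insert_right)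
      also have "(\<Sum>k\<in>K i - {0}. u i k) = eps i / 4 * (\<Sum>k\<in>K i - {0}. (1/2) ^ nat \<bar>k\<bar>)"
        by (simp add: u_def sum_distrib_left)
      also have "\<dots> \<le> eps i / 4 * 4"
        using eps[OF i] fK by (intro mult_left_mono geom_half_int_sum) auto
      finally show ?thesis by simp
    qed
    show "(\<Sum>c\<in>\<Omega>. \<Sum>i\<in>I. - ln (u i (f c i))) \<le> real (card \<Omega>) * T"
    proof -
      have "(\<Sum>c\<in>\<Omega>. \<Sum>i\<in>I. - ln (u i (f c i))) = (\<Sum>i\<in>I. \<Sum>c\<in>\<Omega>. - ln (u i (bb i c)))"
        by (subst sum.swap) (auto simp: f_def intro!: sum.cong)
      also have "\<dots> \<le> (\<Sum>i\<in>I. 2 ^ card X * exp (-((D i)^2/V i)/4))"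
      proof (intro sum_mono)
        fix i assume i: "i \<in> I"
        show "(\<Sum>c\<in>\<Omega>. - ln (u i (bb i c))) \<le> 2 ^ card X * exp (-((D i)^2/V i)/4)"
          using cost_bound[OF X(1) V[OF i] wV[OF i] D[OF i] DV[OF i]]
          unfolding \<Omega>_def u_def bb_def L_def eps_def by simp
      qed
      also have "\<dots> = real (card \<Omega>) * T" unfolding T_def cardO by (simp add: sum_distrib_left)
      finally show ?thesis .
    qed
  qed
  then obtain c0 where c0: "c0 \<in> \<Omega>" and big: "real (card {c\<in>\<Omega>. f c = f c0}) \<ge> card \<Omega> * exp (-T)"
    by blast
  have "exp (- (card X / 10)) \<le> exp (-T)"
    using T unfolding T_def exp_le_cancel_iff by linarith
  hence mono: "card \<Omega> * exp (- (card X / 10)) \<le> card \<Omega> * exp (-T)"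
    by (intro mult_left_mono) auto
  have cO: "real (card \<Omega>) = 2 ^ card X" by (simp add: cardO)
  have big2: "real (card {c\<in>\<Omega>. f c = f c0}) \<ge> 2 ^ card X * exp (- (card X / 10))"
    using mono big unfolding cO by linarith
  have "\<exists>c1\<in>{c\<in>\<Omega>. f c = f c0}. \<not> (real (card {x\<in>X. c0 x \<noteq> c1 x}) < card X / 10)"
  proof (rule ccontr)
    assume "\<not> ?thesis"
    hence sub: "{c\<in>\<Omega>. f c = f c0} \<subseteq> {c\<in>colorings X. real (card {x\<in>X. c0 x \<noteq> c x}) < card X / 10}"
      unfolding \<Omega>_def by auto
    have "card {c\<in>\<Omega>. f c = f c0} \<le> card {c\<in>colorings X. real (card {x\<in>X. c0 x \<noteq> c x}) < card X / 10}"
      using finite_colorings[OF X(1)] by (intro card_mono[OF _ sub]) auto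
    hence "real (card {c\<in>\<Omega>. f c = f c0}) < 2 ^ card X * exp (- (card X / 10))"
      using ball_count[OF X c0[unfolded \<Omega>_def]] by linarith
    with big2 show False by linarith
  qed
  then obtain c1 where c1: "c1 \<in> \<Omega>" "f c1 = f c0" and far: "real (card {x\<in>X. c0 x \<noteq> c1 x}) \<ge> card X / 10"
    by auto
  define col where "col x = (c0 x - c1 x) div 2" for x
  have vals: "c0 x \<in> {-1,1}" "c1 x \<in> {-1,1}" if "x \<in> X" for x
    using c0 c1 that unfolding \<Omega>_def colorings_def by (auto simp: PiE_def Pi_def)
  have colx: "real_of_int (col x) = (c0 x - c1 x) / 2" if "x \<in> X" for x
    using vals[OF that] unfolding col_def by auto
  show ?thesis
  proof (intro exI[of _ col] conjI ballI)
    show "col x \<in> {-1,0,1}" if "x \<in> X" for x using vals[OF that] unfolding col_def by auto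
    have "{x\<in>X. col x \<noteq> 0} = {x\<in>X. c0 x \<noteq> c1 x}"
      using vals unfolding col_def by fastforce
    thus "real (card {x\<in>X. col x \<noteq> 0}) \<ge> card X / 10" using far by simp
    fix i assume i: "i \<in> I"
    have "bb i c0 = bb i c1" using c1(2) i unfolding f_def by (metis restrict_apply')
    hence "\<bar>L i c0 - L i c1\<bar> < 2 * D i" unfolding bb_def using round_diff[OF D[OF i]] by metis
    moreover have "(\<Sum>x\<in>X. w i x * col x) = (L i c0 - L i c1) / 2"
    proof -
      have "(\<Sum>x\<in>X. w i x * col x) = (\<Sum>x\<in>X. (w i x * c0 x - w i x * c1 x) / 2)"
        using colx by (intro sum.cong) (auto simp: diff_divide_distrib[symmetric] right_diff_distrib[symmetric])
      thus ?thesis unfolding L_def by (simp add: sum_subtractf sum_divide_distrib[symmetric])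
    qed
    ultimately show "\<bar>\<Sum>x\<in>X. w i x * col x\<bar> \<le> D i" by simp
  qed
qed

lemma sum_pairs:
  fixes f :: "nat \<Rightarrow> 'a::comm_monoid_add"
  shows "(\<Sum>\<rho>\<in>{s..<s+t}. f (2 * \<rho>) + f (2 * \<rho>+1)) = (\<Sum>\<rho>\<in>{2 * s..<2 * s+2 * t}. f \<rho>)"
proof (induction t)
  case 0 thus ?case by simp
next
  case (Suc t)
  have "{2 * s..<2 * s+2 * Suc t} = {2 * s..<2 * s+2 * t} \<union> {2 * s+2 * t, 2 * s+2 * t+1}" by auto
  moreover have "{2 * s..<2 * s+2 * t} \<inter> {2 * s+2 * t, 2 * s+2 * t+1} = {}" by auto
  ultimately have "(\<Sum>\<rho>\<in>{2 * s..<2 * s+2 * Suc t}. f \<rho>) = (\<Sum>\<rho>\<in>{2 * s..<2 * s+2 * t}. f \<rho>) + (f (2 * s+2 * t) + f (2 * s+2 * t+1))"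
    by (simp add: sum.union_disjoint ac_simps)
  thus ?case using Suc by (simp add: add.assoc algebra_simps)
qed

lemma dyadic_decomp:
  fixes f :: "nat \<Rightarrow> 'a::comm_monoid_add"
  assumes "u < 2^J"
  shows "(\<Sum>\<rho><u. f \<rho>) = (\<Sum>j<J. if odd (u div 2^j)
           then (\<Sum>\<rho>\<in>{u div 2^(j+1) * 2^(j+1) ..< u div 2^(j+1) * 2^(j+1) + 2^j}. f \<rho>) else 0)"
  using assms
proof (induction J arbitrary: u f)
  case 0 thus ?case by simp
next
  case (Suc J)
  define v where "v = u div 2"
  define f' where "f' \<rho> = f (2 * \<rho>) + f (2 * \<rho>+1)" for \<rho>
  have vJ: "v < 2^J" using Suc.prems unfolding v_def by simp
  have u: "u = 2 * v + u mod 2" unfolding v_def by simp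
  have "(\<Sum>\<rho><u. f \<rho>) = (\<Sum>\<rho><2 * v. f \<rho>) + (if odd u then f (2 * v) else 0)"
  proof (cases "odd u")
    case True
    hence "u = Suc (2 * v)" using u by presburger
    thus ?thesis using True by simp
  next
    case False
    hence "u = 2 * v" using u by presburger
    thus ?thesis using False by simp
  qed
  also have "(\<Sum>\<rho><2 * v. f \<rho>) = (\<Sum>\<rho><v. f' \<rho>)"
    using sum_pairs[of f 0 v] unfolding f'_def by (simp add: atLeast0LessThan)
  also have "\<dots> = (\<Sum>j<J. if odd (v div 2^j)
           then (\<Sum>\<rho>\<in>{v div 2^(j+1) * 2^(j+1) ..< v div 2^(j+1) * 2^(j+1) + 2^j}. f' \<rho>) else 0)"
    using Suc.IH[OF vJ] .
  also have "\<dots> = (\<Sum>j<J. if odd (u div 2^(Suc j))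
           then (\<Sum>\<rho>\<in>{u div 2^(Suc j+1) * 2^(Suc j+1) ..< u div 2^(Suc j+1) * 2^(Suc j+1) + 2^Suc j}. f \<rho>) else 0)"
  proof (intro sum.cong refl)
    fix j
    have d1: "u div 2^(Suc j) = v div 2^j" unfolding v_def by (simp add: div_mult2_eq)
    have "(2::nat)^(Suc j+1) = 2 * 2^(j+1)" by simp
    hence d2: "u div 2^(Suc j+1) = v div 2^(j+1)" unfolding v_def by (simp only: div_mult2_eq)
    define c where "c = v div 2^(j+1)"
    have "(\<Sum>\<rho>\<in>{c * 2^(j+1) ..< c * 2^(j+1) + 2^j}. f' \<rho>)
        = (\<Sum>\<rho>\<in>{2 * (c * 2^(j+1)) ..< 2 * (c * 2^(j+1)) + 2 * 2^j}. f \<rho>)"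
      unfolding f'_def by (rule sum_pairs)
    also have "{2 * (c * 2^(j+1)) ..< 2 * (c * 2^(j+1)) + 2 * 2^j} = {c * 2^(Suc j+1) ..< c * 2^(Suc j+1) + 2^Suc j}"
      by (simp add: algebra_simps)
    finally show "(if odd (v div 2^j)
           then (\<Sum>\<rho>\<in>{v div 2^(j+1) * 2^(j+1) ..< v div 2^(j+1) * 2^(j+1) + 2^j}. f' \<rho>) else 0)
        = (if odd (u div 2^(Suc j))
           then (\<Sum>\<rho>\<in>{u div 2^(Suc j+1) * 2^(Suc j+1) ..< u div 2^(Suc j+1) * 2^(Suc j+1) + 2^Suc j}. f \<rho>) else 0)"
      unfolding d1 d2 c_def by simp
  qed
  finally have A: "(\<Sum>\<rho><u. f \<rho>) = (if odd u then f (2 * v) else 0) + (\<Sum>j<J. if odd (u div 2^(Suc j))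
           then (\<Sum>\<rho>\<in>{u div 2^(Suc j+1) * 2^(Suc j+1) ..< u div 2^(Suc j+1) * 2^(Suc j+1) + 2^Suc j}. f \<rho>) else 0)"
    by (simp add: add.commute)
  have B: "(if odd (u div 2^0) then (\<Sum>\<rho>\<in>{u div 2^(0+1) * 2^(0+1) ..< u div 2^(0+1) * 2^(0+1) + 2^0}. f \<rho>) else 0)
        = (if odd u then f (2 * v) else 0)"
  proof -
    have e: "u div 2^(0+1) * 2^(0+1) = 2 * v" unfolding v_def by simp
    show ?thesis unfolding e by simp
  qed
  show ?case unfolding sum.lessThan_Suc_shift A B by simp
qed

definition yy :: "nat \<Rightarrow> nat \<Rightarrow> nat \<Rightarrow> nat \<Rightarrow> nat" where
  "yy n d r k = (r + k * d) mod n"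

definition NN :: "nat \<Rightarrow> nat \<Rightarrow> nat" where
  "NN n d = n div gcd n d"

lemma gN: "n > 0 \<Longrightarrow> gcd n d * NN n d = n"
  unfolding NN_def by simp

lemma NN_pos: "n > 0 \<Longrightarrow> NN n d > 0"
  using gN[of n d] by (metis gr0I mult_0_right not_less0)

lemma yy_mod_g:
  assumes "n > 0" "r < gcd n d"
  shows "yy n d r k mod gcd n d = r"
proof -
  have "yy n d r k mod gcd n d = (r + k * d) mod gcd n d"
    unfolding yy_def by (rule mod_mod_cancel) simp
  also have "\<dots> = r mod gcd n d"
    by (metis dvd_mult gcd_dvd2 mod_add_right_eq add.right_neutral dvd_imp_mod_0 mult.commute mod_mult_self1_is_0)
  also have "\<dots> = r" using assms by simp
  finally show ?thesis .
qed

lemma yy_inj: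
  assumes n: "n > 0" and r: "r < gcd n d" "r' < gcd n d"
    and e: "yy n d r k = yy n d r' k'"
  shows "r = r' \<and> k mod NN n d = k' mod NN n d"
proof -
  have rr: "r = r'" using yy_mod_g[OF n r(1), of k] yy_mod_g[OF n r(2), of k'] e by simp
  define g where "g = gcd n d"
  define N where "N = NN n d"
  define d' where "d' = d div g"
  have gpos: "g > 0" using n unfolding g_def by simp
  have nN: "n = N * g" using gN[OF n, of d] unfolding N_def g_def by (simp add: mult.commute)
  have dd: "d = d' * g" unfolding d'_def g_def by simp
  have cop: "coprime d' N"
    unfolding d'_def N_def NN_def g_def using div_gcd_coprime[of n d] n by (simp add: coprime_commute)
  have e2: "int ((r + k * d) mod n) = int ((r + k' * d) mod n)" using e rr unfolding yy_def by simp
  hence "(int r + int k * int d) mod int n = (int r + int k' * int d) mod int n"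
    by (simp add: of_nat_mod)
  hence "int n dvd (int r + int k * int d) - (int r + int k' * int d)"
    by (simp add: mod_eq_dvd_iff)
  hence "int N * int g dvd (int k - int k') * int d' * int g"
    unfolding nN dd by (simp add: algebra_simps)
  hence "int N dvd (int k - int k') * int d'" using gpos by simp
  moreover have "coprime (int N) (int d')" using cop by (simp add: coprime_commute)
  ultimately have "int N dvd (int k - int k')" by (simp add: coprime_dvd_mult_left_iff)
  hence "int k mod int N = int k' mod int N" by (simp add: mod_eq_dvd_iff)
  hence "k mod N = k' mod N" by (metis of_nat_eq_iff of_nat_mod)
  thus ?thesis using rr unfolding N_def by simp
qed

lemma yy_lt: "n > 0 \<Longrightarrow> yy n d r k < n" unfolding yy_def by simp

lemma yy_period: "yy n d r (k + NN n d) = yy n d r k"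
proof (cases "n = 0")
  case True thus ?thesis by (simp add: yy_def NN_def)
next
  case False
  have "NN n d * d = n * (d div gcd n d)"
    unfolding NN_def by (metis dvd_div_mult gcd_dvd1 gcd_dvd2 div_mult_swap mult.commute)
  hence eq: "r + (k + NN n d) * d = (r + k * d) + (d div gcd n d) * n" by (simp add: algebra_simps)
  show ?thesis unfolding yy_def eq by (rule mod_mult_self1)
qed

lemma yy_bij:
  assumes n: "n > 0"
  shows "bij_betw (\<lambda>(r,k). yy n d r k) ({..<gcd n d} \<times> {..<NN n d}) {..<n}"
proof -
  have inj: "inj_on (\<lambda>(r,k). yy n d r k) ({..<gcd n d} \<times> {..<NN n d})"
  proof (rule inj_onI, clarify)
    fix r k r' k' assume a: "r < gcd n d" "k < NN n d" "r' < gcd n d" "k' < NN n d"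
      and e: "yy n d r k = yy n d r' k'"
    from yy_inj[OF n a(1) a(3) e] a show "r = r' \<and> k = k'" by simp
  qed
  moreover have "(\<lambda>(r,k). yy n d r k) ` ({..<gcd n d} \<times> {..<NN n d}) = {..<n}"
  proof (rule card_subset_eq)
    show "finite {..<n}" by simp
    show "(\<lambda>(r,k). yy n d r k) ` ({..<gcd n d} \<times> {..<NN n d}) \<subseteq> {..<n}" using yy_lt[OF n] by auto
    show "card ((\<lambda>(r,k). yy n d r k) ` ({..<gcd n d} \<times> {..<NN n d})) = card {..<n}"
      using inj gN[OF n, of d] by (simp add: card_image card_cartesian_product)
  qed
  ultimately show ?thesis unfolding bij_betw_def by simp
qed

lemma yy_surj:
  assumes n: "n > 0" and a: "a < n"
  shows "\<exists>k < NN n d. yy n d (a mod gcd n d) k = a"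
proof -
  have "a \<in> (\<lambda>(r,k). yy n d r k) ` ({..<gcd n d} \<times> {..<NN n d})"
    using yy_bij[OF n, of d] a by (simp add: bij_betw_def)
  then obtain r k where rk: "r < gcd n d" "k < NN n d" "yy n d r k = a" by auto
  have "a mod gcd n d = r" using yy_mod_g[OF n rk(1), of k] rk(3) by simp
  thus ?thesis using rk by auto
qed

lemma sum_card_cosets:
  assumes n: "n > 0" and X: "X \<subseteq> {..<n}"
  shows "(\<Sum>r<gcd n d. card {k. k < NN n d \<and> yy n d r k \<in> X}) = card X"
proof -
  define S where "S = {p \<in> {..<gcd n d} \<times> {..<NN n d}. (\<lambda>(r,k). yy n d r k) p \<in> X}"
  have "S = Sigma {..<gcd n d} (\<lambda>r. {k. k < NN n d \<and> yy n d r k \<in> X})" unfolding S_def by auto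
  hence "card S = (\<Sum>r<gcd n d. card {k. k < NN n d \<and> yy n d r k \<in> X})" by (simp add: card_SigmaI)
  moreover have "card S = card X"
  proof -
    have bij: "bij_betw (\<lambda>(r,k). yy n d r k) ({..<gcd n d} \<times> {..<NN n d}) {..<n}" by (rule yy_bij[OF n])
    have "bij_betw (\<lambda>(r,k). yy n d r k) S X"
      unfolding bij_betw_def
    proof
      show "inj_on (\<lambda>(r,k). yy n d r k) S"
      proof -
        have inj: "inj_on (\<lambda>(r,k). yy n d r k) ({..<gcd n d} \<times> {..<NN n d})"
          using bij unfolding bij_betw_def by blast
        have "S \<subseteq> {..<gcd n d} \<times> {..<NN n d}" unfolding S_def by blast
        from inj_on_subset[OF inj this] show ?thesis .
      qed
      show "(\<lambda>(r,k). yy n d r k) ` S = X"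
      proof
        show "(\<lambda>(r,k). yy n d r k) ` S \<subseteq> X" unfolding S_def by auto
        show "X \<subseteq> (\<lambda>(r,k). yy n d r k) ` S"
        proof
          fix x assume x: "x \<in> X"
          hence "x \<in> (\<lambda>(r,k). yy n d r k) ` ({..<gcd n d} \<times> {..<NN n d})"
            using bij X unfolding bij_betw_def by auto
          then obtain p where p: "p \<in> {..<gcd n d} \<times> {..<NN n d}" "x = (\<lambda>(r,k). yy n d r k) p" by blast
          hence "p \<in> S" unfolding S_def using x by auto
          thus "x \<in> (\<lambda>(r,k). yy n d r k) ` S" using p(2) by blast
        qed
      qed
    qed
    thus ?thesis by (rule bij_betw_same_card)
  qed
  ultimately show ?thesis by simp
qed

lemma card_double:
  assumes n: "n > 0"
  shows "card {k. k < 2 * NN n d \<and> yy n d r k \<in> X} = 2 * card {k. k < NN n d \<and> yy n d r k \<in> X}"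
proof -
  define A where "A = {k. k < NN n d \<and> yy n d r k \<in> X}"
  have "{k. k < 2 * NN n d \<and> yy n d r k \<in> X} = A \<union> (\<lambda>k. k + NN n d) ` A"
  proof (rule set_eqI, rule iffI)
    fix k assume k: "k \<in> {k. k < 2 * NN n d \<and> yy n d r k \<in> X}"
    show "k \<in> A \<union> (\<lambda>k. k + NN n d) ` A"
    proof (cases "k < NN n d")
      case True thus ?thesis using k unfolding A_def by auto
    next
      case False
      have kk: "k = (k - NN n d) + NN n d" using False by simp
      have "k - NN n d \<in> A" using k False yy_period[of n d r "k - NN n d"] kk unfolding A_def by auto
      hence "k \<in> (\<lambda>k. k + NN n d) ` A" using kk by (rule rev_image_eqI)
      thus ?thesis by simp
    qed
  next
    fix k assume "k \<in> A \<union> (\<lambda>k. k + NN n d) ` A"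
    thus "k \<in> {k. k < 2 * NN n d \<and> yy n d r k \<in> X}" unfolding A_def using yy_period[of n d r] by auto
  qed
  moreover have "card (A \<union> (\<lambda>k. k + NN n d) ` A) = card A + card ((\<lambda>k. k + NN n d) ` A)"
    by (rule card_Un_disjoint) (auto simp: A_def)
  moreover have "card ((\<lambda>k. k + NN n d) ` A) = card A" by (rule card_image) (simp add: inj_on_def)
  ultimately show ?thesis unfolding A_def by simp
qed

definition rk :: "nat \<Rightarrow> nat set \<Rightarrow> nat \<Rightarrow> nat \<Rightarrow> nat \<Rightarrow> nat" where
  "rk n X d r k = card {k'. k' < k \<and> yy n d r k' \<in> X}"

definition GG :: "nat \<Rightarrow> nat set \<Rightarrow> nat \<Rightarrow> nat \<Rightarrow> (nat \<Rightarrow> int) \<Rightarrow> nat \<Rightarrow> int" where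
  "GG n X d r col u = (\<Sum>k\<in>{k. k < 2 * NN n d \<and> yy n d r k \<in> X \<and> rk n X d r k < u}. col (yy n d r k))"

definition KS :: "nat \<Rightarrow> nat set \<Rightarrow> nat \<Rightarrow> nat \<Rightarrow> nat \<Rightarrow> nat \<Rightarrow> nat set" where
  "KS n X d r j q = {k. k < 2 * NN n d \<and> yy n d r k \<in> X \<and> q * 2^(j+1) \<le> rk n X d r k \<and> rk n X d r k < q * 2^(j+1) + 2^j}"

definition BS :: "nat \<Rightarrow> nat set \<Rightarrow> nat \<Rightarrow> nat \<Rightarrow> (nat \<Rightarrow> int) \<Rightarrow> nat \<Rightarrow> nat \<Rightarrow> int" where
  "BS n X d r col j q = (\<Sum>k\<in>KS n X d r j q. col (yy n d r k))"

lemma rk_mono: "k \<le> k' \<Longrightarrow> rk n X d r k \<le> rk n X d r k'"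
  unfolding rk_def by (intro card_mono) auto

lemma rk_strict:
  assumes "k < k'" "yy n d r k \<in> X"
  shows "rk n X d r k < rk n X d r k'"
  unfolding rk_def
proof (rule psubset_card_mono)
  show "finite {k''. k'' < k' \<and> yy n d r k'' \<in> X}" by simp
  show "{k''. k'' < k \<and> yy n d r k'' \<in> X} \<subset> {k''. k'' < k' \<and> yy n d r k'' \<in> X}"
    using assms by auto
qed

lemma rk_lt_iff:
  assumes "yy n d r k \<in> X"
  shows "rk n X d r k < rk n X d r K \<longleftrightarrow> k < K"
  using rk_strict[OF _ assms, of K] rk_mono[of K k n X d r] by (cases "k < K") auto

lemma rk_inj:
  assumes "yy n d r k \<in> X" "yy n d r k' \<in> X" "rk n X d r k = rk n X d r k'"
  shows "k = k'"
  using rk_strict[of k k' n d r X] rk_strict[of k' k n d r X] assms by (cases k k' rule: linorder_cases) auto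

lemma sum_ranks:
  fixes col :: "nat \<Rightarrow> int" and S :: "nat set"
  assumes S: "finite S"
  shows "(\<Sum>\<rho>\<in>S. \<Sum>k\<in>{k. k < 2 * NN n d \<and> yy n d r k \<in> X \<and> rk n X d r k = \<rho>}. col (yy n d r k))
       = (\<Sum>k\<in>{k. k < 2 * NN n d \<and> yy n d r k \<in> X \<and> rk n X d r k \<in> S}. col (yy n d r k))"
proof -
  define KK where "KK = {k. k < 2 * NN n d \<and> yy n d r k \<in> X \<and> rk n X d r k \<in> S}"
  have "(\<Sum>\<rho>\<in>S. \<Sum>k\<in>{k. k \<in> KK \<and> rk n X d r k = \<rho>}. col (yy n d r k)) = (\<Sum>k\<in>KK. col (yy n d r k))"
    using S by (intro sum.group) (auto simp: KK_def)
  moreover have "{k. k \<in> KK \<and> rk n X d r k = \<rho>} = {k. k < 2 * NN n d \<and> yy n d r k \<in> X \<and> rk n X d r k = \<rho>}"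
    if "\<rho> \<in> S" for \<rho> using that unfolding KK_def by auto
  ultimately show ?thesis unfolding KK_def by (metis (no_types, lifting) sum.cong)
qed

lemma GG_blocks:
  fixes col :: "nat \<Rightarrow> int"
  assumes u: "u < 2^J"
  shows "GG n X d r col u = (\<Sum>j<J. if odd (u div 2^j) then BS n X d r col j (u div 2^(j+1)) else 0)"
proof -
  define fr where "fr \<rho> = (\<Sum>k\<in>{k. k < 2 * NN n d \<and> yy n d r k \<in> X \<and> rk n X d r k = \<rho>}. col (yy n d r k))" for \<rho>
  have "GG n X d r col u = (\<Sum>\<rho><u. fr \<rho>)"
    unfolding GG_def fr_def by (subst sum_ranks) auto
  also have "\<dots> = (\<Sum>j<J. if odd (u div 2^j)
           then (\<Sum>\<rho>\<in>{u div 2^(j+1) * 2^(j+1) ..< u div 2^(j+1) * 2^(j+1) + 2^j}. fr \<rho>) else 0)"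
    using u by (rule dyadic_decomp)
  also have "\<dots> = (\<Sum>j<J. if odd (u div 2^j) then BS n X d r col j (u div 2^(j+1)) else 0)"
  proof (intro sum.cong refl)
    fix j
    have "(\<Sum>\<rho>\<in>{u div 2^(j+1) * 2^(j+1) ..< u div 2^(j+1) * 2^(j+1) + 2^j}. fr \<rho>) = BS n X d r col j (u div 2^(j+1))"
      unfolding fr_def BS_def KS_def by (subst sum_ranks) (auto intro!: sum.cong)
    thus "(if odd (u div 2^j)
           then (\<Sum>\<rho>\<in>{u div 2^(j+1) * 2^(j+1) ..< u div 2^(j+1) * 2^(j+1) + 2^j}. fr \<rho>) else 0)
       = (if odd (u div 2^j) then BS n X d r col j (u div 2^(j+1)) else 0)" by simp
  qed
  finally show ?thesis .
qed

lemma GG_window: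
  fixes col :: "nat \<Rightarrow> int"
  assumes K: "K0 \<le> K1" "K1 \<le> 2 * NN n d"
  shows "(\<Sum>k\<in>{k. K0 \<le> k \<and> k < K1 \<and> yy n d r k \<in> X}. col (yy n d r k))
       = GG n X d r col (rk n X d r K1) - GG n X d r col (rk n X d r K0)"
proof -
  have e: "{k. k < 2 * NN n d \<and> yy n d r k \<in> X \<and> rk n X d r k < rk n X d r K} = {k. k < K \<and> yy n d r k \<in> X}"
    if "K \<le> 2 * NN n d" for K using that rk_lt_iff[of n d r _ X K] by auto
  have "{k. k < K1 \<and> yy n d r k \<in> X} = {k. k < K0 \<and> yy n d r k \<in> X} \<union> {k. K0 \<le> k \<and> k < K1 \<and> yy n d r k \<in> X}"
    using K by auto
  moreover have "(\<Sum>k\<in>{k. k < K0 \<and> yy n d r k \<in> X} \<union> {k. K0 \<le> k \<and> k < K1 \<and> yy n d r k \<in> X}. col (yy n d r k))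
      = (\<Sum>k\<in>{k. k < K0 \<and> yy n d r k \<in> X}. col (yy n d r k)) + (\<Sum>k\<in>{k. K0 \<le> k \<and> k < K1 \<and> yy n d r k \<in> X}. col (yy n d r k))"
  proof (rule sum.union_disjoint)
    show "finite {k. k < K0 \<and> yy n d r k \<in> X}" by (rule finite_subset[of _ "{..<K0}"]) auto
    show "finite {k. K0 \<le> k \<and> k < K1 \<and> yy n d r k \<in> X}" by (rule finite_subset[of _ "{..<K1}"]) auto
  qed auto
  ultimately have "(\<Sum>k\<in>{k. k < K1 \<and> yy n d r k \<in> X}. col (yy n d r k))
      = (\<Sum>k\<in>{k. k < K0 \<and> yy n d r k \<in> X}. col (yy n d r k)) + (\<Sum>k\<in>{k. K0 \<le> k \<and> k < K1 \<and> yy n d r k \<in> X}. col (yy n d r k))"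
    by simp
  thus ?thesis unfolding GG_def using e K by simp
qed

lemma AP_window:
  fixes col :: "nat \<Rightarrow> int"
  assumes n: "n > 0" and a: "a < n" and l: "l * gcd n d \<le> n"
  shows "\<exists>r<gcd n d. \<exists>K0 K1. K0 \<le> K1 \<and> K1 \<le> 2 * NN n d \<and>
           (\<Sum>x\<in>arith_prog n a d l \<inter> X. col x) = GG n X d r col (rk n X d r K1) - GG n X d r col (rk n X d r K0)"
proof -
  define g where "g = gcd n d"
  define r where "r = a mod g"
  have gpos: "g > 0" using n unfolding g_def by simp
  have r: "r < g" unfolding r_def using gpos by simp
  obtain k0 where k0: "k0 < NN n d" "yy n d r k0 = a" using yy_surj[OF n a, of d] unfolding r_def g_def by blast
  have lN: "l \<le> NN n d"
  proof -
    have "l * g \<le> NN n d * g" using l gN[OF n, of d] unfolding g_def by (simp add: mult.commute)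
    thus ?thesis using gpos by simp
  qed
  have A: "arith_prog n a d l = yy n d r ` {k0..<k0+l}"
  proof -
    have "(a + k * d) mod n = yy n d r (k0 + k)" for k
    proof -
      have "(a + k * d) mod n = ((r + k0 * d) mod n + k * d) mod n" using k0(2) unfolding yy_def by simp
      also have "\<dots> = (r + k0 * d + k * d) mod n" by (rule mod_add_left_eq)
      also have "\<dots> = yy n d r (k0 + k)" unfolding yy_def by (simp add: algebra_simps)
      finally show ?thesis .
    qed
    hence "arith_prog n a d l = (\<lambda>k. yy n d r (k0 + k)) ` {..<l}"
      unfolding arith_prog_def by auto
    also have "\<dots> = yy n d r ` ((\<lambda>k. k0 + k) ` {..<l})" by (simp add: image_image)
    also have "(\<lambda>k. k0 + k) ` {..<l} = {k0..<k0+l}"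
      by (simp add: lessThan_atLeast0 image_add_atLeastLessThan add.commute)
    finally show ?thesis .
  qed
  have inj: "inj_on (yy n d r) {k0..<k0+l}"
  proof (rule inj_onI)
    fix k k' assume kk: "k \<in> {k0..<k0+l}" "k' \<in> {k0..<k0+l}" and e: "yy n d r k = yy n d r k'"
    have "k mod NN n d = k' mod NN n d" using yy_inj[OF n _ _ e] r unfolding g_def by auto
    hence md: "NN n d dvd (b - a)" if "a \<le> b" "a \<in> {k, k'}" "b \<in> {k, k'}" for a b
      using that mod_eq_dvd_iff_nat[of a b "NN n d"] by auto
    have lt: "b - a < NN n d" if "a \<in> {k, k'}" "b \<in> {k, k'}" for a b
      using that kk lN by auto
    show "k = k'"
    proof (cases "k \<le> k'")
      case True
      have "k' - k = 0" using md[OF True] lt[of k k'] by (metis dvd_imp_le insertI1 insertI2 neq0_conv not_le)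
      thus ?thesis using True by simp
    next
      case False
      have "k - k' = 0" using md[of k' k] lt[of k' k] False by (metis dvd_imp_le insertI1 insertI2 neq0_conv not_le nat_le_linear)
      thus ?thesis using False by simp
    qed
  qed
  have "(\<Sum>x\<in>arith_prog n a d l \<inter> X. col x) = (\<Sum>x\<in>yy n d r ` {k\<in>{k0..<k0+l}. yy n d r k \<in> X}. col x)"
    unfolding A by (intro sum.cong) auto
  also have "\<dots> = (\<Sum>k\<in>{k\<in>{k0..<k0+l}. yy n d r k \<in> X}. col (yy n d r k))"
    using inj by (subst sum.reindex) (auto intro: inj_on_subset)
  also have "{k\<in>{k0..<k0+l}. yy n d r k \<in> X} = {k. k0 \<le> k \<and> k < k0 + l \<and> yy n d r k \<in> X}" by auto
  also have "(\<Sum>k\<in>\<dots>. col (yy n d r k)) = GG n X d r col (rk n X d r (k0+l)) - GG n X d r col (rk n X d r k0)"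
    using k0 lN by (intro GG_window) auto
  finally show ?thesis using r unfolding g_def
    by (intro exI[of _ r] conjI exI[of _ k0] exI[of _ "k0+l"]) (use k0 lN in auto)
qed

definition wt :: "nat \<Rightarrow> nat set \<Rightarrow> nat \<Rightarrow> nat \<Rightarrow> nat \<Rightarrow> nat \<Rightarrow> nat \<Rightarrow> real" where
  "wt n X d r j q x = real (card {k \<in> KS n X d r j q. yy n d r k = x})"

lemma finite_KS: "finite (KS n X d r j q)"
  unfolding KS_def by (rule finite_subset[of _ "{..<2 * NN n d}"]) auto

lemma BS_wt:
  fixes col :: "nat \<Rightarrow> int"
  assumes X: "finite X"
  shows "real_of_int (BS n X d r col j q) = (\<Sum>x\<in>X. wt n X d r j q x * real_of_int (col x))"
proof -
  have "BS n X d r col j q = (\<Sum>x\<in>X. \<Sum>k\<in>{k. k \<in> KS n X d r j q \<and> yy n d r k = x}. col (yy n d r k))"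
    unfolding BS_def using X finite_KS by (intro sum.group[symmetric]) (auto simp: KS_def)
  also have "\<dots> = (\<Sum>x\<in>X. int (card {k \<in> KS n X d r j q. yy n d r k = x}) * col x)"
    by (intro sum.cong refl) auto
  finally show ?thesis unfolding wt_def by simp
qed

lemma wt_le2:
  assumes n: "n > 0" and r: "r < gcd n d"
  shows "wt n X d r j q x \<le> 2"
proof -
  define S where "S = {k \<in> KS n X d r j q. yy n d r k = x}"
  have "inj_on (\<lambda>k. k div NN n d) S"
  proof (rule inj_onI)
    fix k k' assume k: "k \<in> S" "k' \<in> S" and e: "k div NN n d = k' div NN n d"
    have "yy n d r k = yy n d r k'" using k unfolding S_def by auto
    hence "k mod NN n d = k' mod NN n d" using yy_inj[OF n r r] by blast
    thus "k = k'" using e by (metis div_mult_mod_eq)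
  qed
  hence "card S = card ((\<lambda>k. k div NN n d) ` S)" by (simp add: card_image)
  also have "\<dots> \<le> card {0::nat, 1}"
  proof (rule card_mono)
    show "(\<lambda>k. k div NN n d) ` S \<subseteq> {0, 1}"
    proof
      fix z assume "z \<in> (\<lambda>k. k div NN n d) ` S"
      then obtain k where "k \<in> S" "z = k div NN n d" by auto
      hence "k < 2 * NN n d" "z = k div NN n d" unfolding S_def KS_def by auto
      hence "z < 2" using NN_pos[OF n, of d] by (simp add: div_less_iff_less_mult)
      thus "z \<in> {0,1}" by auto
    qed
  qed auto
  finally show ?thesis unfolding wt_def S_def by simp
qed

lemma card_KS: "card (KS n X d r j q) \<le> 2^j"
proof -
  have "inj_on (rk n X d r) (KS n X d r j q)"
    by (rule inj_onI) (auto simp: KS_def intro: rk_inj)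
  hence "card (KS n X d r j q) = card (rk n X d r ` KS n X d r j q)" by (simp add: card_image)
  also have "\<dots> \<le> card {q * 2^(j+1) ..< q * 2^(j+1) + 2^j}"
    by (rule card_mono) (auto simp: KS_def)
  finally show ?thesis by simp
qed

lemma sum_wt:
  assumes X: "finite X"
  shows "(\<Sum>x\<in>X. wt n X d r j q x) \<le> 2^j"
proof -
  have "(\<Sum>x\<in>X. card {k \<in> KS n X d r j q. yy n d r k = x}) = (\<Sum>x\<in>X. \<Sum>k\<in>{k. k \<in> KS n X d r j q \<and> yy n d r k = x}. (1::nat))"
    by simp
  also have "\<dots> = (\<Sum>k\<in>KS n X d r j q. 1)"
    using X finite_KS by (intro sum.group) (auto simp: KS_def)
  also have "\<dots> = card (KS n X d r j q)" by simp
  finally have "(\<Sum>x\<in>X. card {k \<in> KS n X d r j q. yy n d r k = x}) \<le> 2^j" using card_KS by simp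
  hence "real (\<Sum>x\<in>X. card {k \<in> KS n X d r j q. yy n d r k = x}) \<le> 2^j"
    by (metis of_nat_le_iff of_nat_numeral of_nat_power)
  thus ?thesis unfolding wt_def by simp
qed

lemma sum_wt_sq:
  assumes n: "n > 0" and r: "r < gcd n d" and X: "finite X"
  shows "(\<Sum>x\<in>X. (wt n X d r j q x)^2) \<le> 2 * 2^j"
proof -
  have "(\<Sum>x\<in>X. (wt n X d r j q x)^2) \<le> (\<Sum>x\<in>X. 2 * wt n X d r j q x)"
  proof (rule sum_mono)
    fix x
    have "0 \<le> wt n X d r j q x" unfolding wt_def by simp
    thus "(wt n X d r j q x)^2 \<le> 2 * wt n X d r j q x"
      using wt_le2[OF n r, of X j q x] by (simp add: power2_eq_square mult_right_mono)
  qed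
  also have "\<dots> = 2 * (\<Sum>x\<in>X. wt n X d r j q x)" by (simp add: sum_distrib_left)
  also have "\<dots> \<le> 2 * 2^j" using sum_wt[OF X] by simp
  finally show ?thesis .
qed

lemma card_q:
  "real (card {q::nat. q * 2^(j+1) + 2^j \<le> R}) \<le> real R / 2^j"
proof -
  have "{q::nat. q * 2^(j+1) + 2^j \<le> R} \<subseteq> {..< R div 2^j}"
  proof
    fix q assume "q \<in> {q::nat. q * 2^(j+1) + 2^j \<le> R}"
    hence "(q+1) * 2^j \<le> R" by (simp add: algebra_simps)
    hence "q + 1 \<le> R div 2^j" using less_eq_div_iff_mult_less_eq[of "2^j" "q+1" R] by simp
    thus "q \<in> {..< R div 2^j}" by simp
  qed
  hence "card {q::nat. q * 2^(j+1) + 2^j \<le> R} \<le> R div 2^j"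
    by (metis card_lessThan card_mono finite_lessThan)
  hence "real (card {q::nat. q * 2^(j+1) + 2^j \<le> R}) \<le> real (R div 2^j)" by simp
  also have "\<dots> \<le> real R / 2^j"
  proof -
    have "(R div 2^j) * 2^j \<le> R" by (rule div_times_less_eq_dividend)
    hence "real (R div 2^j) * 2^j \<le> real R" by (metis of_nat_le_iff of_nat_mult of_nat_numeral of_nat_power)
    thus ?thesis by (simp add: field_simps)
  qed
  finally show ?thesis .
qed

lemma sum_R:
  assumes n: "n > 0" and X: "X \<subseteq> {..<n}"
  shows "(\<Sum>r<gcd n d. rk n X d r (2 * NN n d)) = 2 * card X"
proof -
  have "(\<Sum>r<gcd n d. rk n X d r (2 * NN n d)) = (\<Sum>r<gcd n d. 2 * card {k. k < NN n d \<and> yy n d r k \<in> X})"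
    unfolding rk_def using card_double[OF n] by simp
  also have "\<dots> = 2 * (\<Sum>r<gcd n d. card {k. k < NN n d \<and> yy n d r k \<in> X})"
    by (simp add: sum_distrib_left)
  also have "\<dots> = 2 * card X" using sum_card_cosets[OF n X, of d] by simp
  finally show ?thesis .
qed

lemma rk_le_R: "K \<le> 2 * NN n d \<Longrightarrow> rk n X d r K \<le> rk n X d r (2 * NN n d)"
  by (rule rk_mono)

lemma term_bound:
  fixes m Lg :: real and J i :: nat
  assumes m: "m > 0" and L: "Lg \<ge> 0" and J: "2^J \<le> 4 * m" and i: "i < J"
  shows "2 * sqrt (Lg + 20 + real i) * sqrt (2 * 2^(J - Suc i)) \<le> 18 * sqrt m * sqrt (1 + Lg) * 0.8^i"
proof -
  have pw: "(2::real) * 2^(J - Suc i) = 2^J / 2^i"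
  proof -
    have "J = (J - Suc i) + Suc i" using i by simp
    hence "(2::real)^J = 2^(J - Suc i) * 2^(Suc i)" by (metis power_add)
    thus ?thesis by (simp add: field_simps)
  qed
  have a1: "Lg + 20 + real i \<le> (1 + Lg) * (20 + real i)"
    using L by (simp add: algebra_simps)
  have bern: "1 + real i * 0.28 \<le> (1 + 0.28::real)^i"
    by (rule Bernoulli_inequality) simp
  have a2: "20 + real i \<le> 20 * 0.64^i * 2^i"
  proof -
    have "(0.64::real)^i * 2^i = 1.28^i" by (simp flip: power_mult_distrib)
    thus ?thesis using bern by simp
  qed
  have "4 * (Lg + 20 + real i) * (2^J / 2^i) \<le> 4 * ((1 + Lg) * (20 + real i)) * (4 * m / 2^i)"
    using a1 J L by (intro mult_mono divide_right_mono) auto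
  also have "\<dots> = 16 * m * (1 + Lg) * ((20 + real i) / 2^i)" by (simp add: field_simps)
  also have "\<dots> \<le> 16 * m * (1 + Lg) * (20 * 0.64^i)"
    using a2 m L by (intro mult_left_mono) (auto simp: field_simps)
  also have "\<dots> \<le> 324 * m * (1 + Lg) * 0.64^i" using m L by (simp add: mult_right_mono)
  finally have sq: "4 * (Lg + 20 + real i) * (2^J / 2^i) \<le> 324 * m * (1 + Lg) * 0.64^i" .
  have "2 * sqrt (Lg + 20 + real i) * sqrt (2 * 2^(J - Suc i)) = sqrt (4 * (Lg + 20 + real i) * (2^J / 2^i))"
  proof -
    have s4: "sqrt (4::real) = 2" by (simp add: real_sqrt_eq_iff)
    show ?thesis unfolding pw real_sqrt_mult s4 ..
  qed
  also have "\<dots> \<le> sqrt (324 * m * (1 + Lg) * 0.64^i)" using sq by simp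
  also have "\<dots> = 18 * sqrt m * sqrt (1 + Lg) * 0.8^i"
  proof -
    have "sqrt (0.64::real) = 0.8" by (rule real_sqrt_unique) (simp_all add: power2_eq_square)
    hence "sqrt ((0.64::real)^i) = 0.8^i" by (simp only: real_sqrt_power)
    moreover have "sqrt (324::real) = 18" by (simp add: real_sqrt_eq_iff)
    ultimately show ?thesis by (simp add: real_sqrt_mult)
  qed
  finally show ?thesis .
qed

lemma final_sum_bound:
  fixes m Lg :: real and J :: nat
  assumes m: "m > 0" and L: "Lg \<ge> 0" and J: "2^J \<le> 4 * m"
  shows "(\<Sum>j<J. 2 * sqrt (Lg + 20 + real (J - Suc j)) * sqrt (2 * 2^j)) \<le> 90 * sqrt m * sqrt (1 + Lg)"
proof -
  have "(\<Sum>j<J. 2 * sqrt (Lg + 20 + real (J - Suc j)) * sqrt (2 * 2^j))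
      = (\<Sum>i<J. 2 * sqrt (Lg + 20 + real (J - Suc (J - Suc i))) * sqrt (2 * 2^(J - Suc i)))"
    by (rule sum.nat_diff_reindex[symmetric])
  also have "\<dots> = (\<Sum>i<J. 2 * sqrt (Lg + 20 + real i) * sqrt (2 * 2^(J - Suc i)))"
    by (intro sum.cong refl) (simp add: Suc_diff_Suc)
  also have "\<dots> \<le> (\<Sum>i<J. 18 * sqrt m * sqrt (1 + Lg) * 0.8^i)"
    using term_bound[OF m L J] by (intro sum_mono) auto
  also have "\<dots> = 18 * sqrt m * sqrt (1 + Lg) * (\<Sum>i<J. 0.8^i)" by (simp add: sum_distrib_left)
  also have "(\<Sum>i<J. (0.8::real)^i) \<le> 5"
  proof -
    have "(\<Sum>i<J. (0.8::real)^i) = (1 - 0.8^J) / (1 - 0.8)" by (simp add: sum_gp_strict)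
    also have "\<dots> \<le> 5" by simp
    finally show ?thesis .
  qed
  hence "18 * sqrt m * sqrt (1 + Lg) * (\<Sum>i<J. 0.8^i) \<le> 18 * sqrt m * sqrt (1 + Lg) * 5"
    using m L by (intro mult_left_mono) auto
  finally show ?thesis by simp
qed

lemma geo_cost_bound:
  fixes J :: nat
  shows "(\<Sum>j<J. (2 / exp 1)^(J - Suc j)) \<le> (9::real)"
proof -
  have "(\<Sum>j<J. (2 / exp 1)^(J - Suc j)) = (\<Sum>i<J. (2 / exp 1)^(J - Suc (J - Suc i)))"
    by (rule sum.nat_diff_reindex[symmetric])
  also have "\<dots> = (\<Sum>i<J. (2 / exp (1::real))^i)"
    by (intro sum.cong refl) (simp add: Suc_diff_Suc)
  also have "\<dots> \<le> (\<Sum>i<J. (8/9::real)^i)"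
  proof (intro sum_mono power_mono)
    have "1 + 1/2 \<le> exp (1/2::real)" using exp_ge_add_one_self[of "1/2"] by simp
    hence "(3/2)^2 \<le> (exp (1/2::real))^2" by (intro power_mono) auto
    also have "(exp (1/2::real))^2 = exp 1" by (simp flip: exp_of_nat_mult)
    finally have "9/4 \<le> exp (1::real)" by (simp add: power2_eq_square)
    thus "2 / exp 1 \<le> (8/9::real)" by (simp add: field_simps)
  qed auto
  also have "\<dots> = (1 - (8/9)^J) / (1 - 8/9)" by (simp add: sum_gp_strict)
  also have "\<dots> \<le> 9" by simp
  finally show ?thesis .
qed

lemma cost_nested:
  fixes n m J :: nat and X :: "nat set" and Lg :: real
  assumes n: "n > 0" and X: "X \<subseteq> {..<n}" and m: "m = card X" "m > 0" and mn: "m \<le> n"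
    and J: "2 * m < 2^J" and Lg: "Lg = ln (real n / real m)"
  shows "(\<Sum>d<n. \<Sum>r<gcd n d. \<Sum>j<J. \<Sum>q\<in>{q. q * 2^(j+1) + 2^j \<le> rk n X d r (2 * NN n d)}.
            exp (-(Lg + 20 + real (J - Suc j)))) \<le> real m / 10"
proof -
  define c where "c j = exp (-(Lg + 20 + real (J - Suc j)))" for j
  define R where "R d r = rk n X d r (2 * NN n d)" for d r
  have cpos: "c j \<ge> 0" for j unfolding c_def by simp
  have "(\<Sum>d<n. \<Sum>r<gcd n d. \<Sum>j<J. \<Sum>q\<in>{q. q * 2^(j+1) + 2^j \<le> R d r}. c j)
      = (\<Sum>d<n. \<Sum>r<gcd n d. \<Sum>j<J. real (card {q. q * 2^(j+1) + 2^j \<le> R d r}) * c j)"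
    by simp
  also have "\<dots> \<le> (\<Sum>d<n. \<Sum>r<gcd n d. \<Sum>j<J. (real (R d r) / 2^j) * c j)"
    by (intro sum_mono mult_right_mono card_q cpos)
  also have "\<dots> = (\<Sum>d<n. \<Sum>j<J. (real (\<Sum>r<gcd n d. R d r) / 2^j) * c j)"
  proof (rule sum.cong[OF refl])
    fix d
    have "(\<Sum>r<gcd n d. \<Sum>j<J. (real (R d r) / 2^j) * c j) = (\<Sum>j<J. \<Sum>r<gcd n d. (real (R d r) / 2^j) * c j)"
      by (rule sum.swap)
    also have "\<dots> = (\<Sum>j<J. (real (\<Sum>r<gcd n d. R d r) / 2^j) * c j)"
      by (simp add: sum_divide_distrib sum_distrib_right)
    finally show "(\<Sum>r<gcd n d. \<Sum>j<J. (real (R d r) / 2^j) * c j) = (\<Sum>j<J. (real (\<Sum>r<gcd n d. R d r) / 2^j) * c j)" .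
  qed
  also have "\<dots> = (\<Sum>d<n. \<Sum>j<J. (2 * real m / 2^j) * c j)"
    using sum_R[OF n X] unfolding R_def m by simp
  also have "\<dots> = real n * (\<Sum>j<J. (2 * real m / 2^j) * c j)" by simp
  also have "\<dots> \<le> real n * (\<Sum>j<J. (2 * real m / real n) * exp (-20) * (2 / exp 1)^(J - Suc j))"
  proof (intro mult_left_mono sum_mono)
    fix j assume j: "j \<in> {..<J}"
    define i where "i = J - Suc j"
    have Jij: "J = Suc (j + i)" using j unfolding i_def by simp
    have mm: "real m \<le> 2^j * 2^i"
    proof -
      have "2 * m < 2 * 2^(j+i)" using J unfolding Jij by simp
      hence "m \<le> 2^j * 2^i" by (simp add: power_add)
      hence "real m \<le> real (2^j * 2^i)" by (simp only: of_nat_le_iff)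
      thus ?thesis by simp
    qed
    have "exp Lg = real n / real m" unfolding Lg using n m by (intro exp_ln) auto
    hence emL: "exp (-Lg) = real m / real n" by (simp add: exp_minus)
    have ci: "c j = (real m / real n) * exp (-20) * exp (- real i)"
      unfolding c_def i_def[symmetric] emL[symmetric] by (simp flip: exp_add)
    have ei: "exp (- real i) = exp (-1) ^ i" using exp_of_nat_mult[of i "-1"] by simp
    have s1: "real m / 2^j \<le> 2^i" using mm by (simp add: pos_divide_le_eq mult.commute)
    have s2: "exp (- real i) * 2^i = (2 / exp 1)^i"
    proof -
      have e2: "exp (-1::real) * 2 = 2 / exp 1" by (simp add: exp_minus divide_inverse)
      show ?thesis unfolding ei power_mult_distrib[symmetric] e2 ..
    qed
    have "(2 * real m / 2^j) * c j = (2 * real m / real n) * exp (-20) * exp (- real i) * (real m / 2^j)"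
      unfolding ci by (simp add: divide_inverse ac_simps)
    also have "\<dots> \<le> (2 * real m / real n) * exp (-20) * exp (- real i) * 2^i"
      by (rule mult_left_mono[OF s1]) simp
    also have "\<dots> = (2 * real m / real n) * exp (-20) * (2 / exp 1)^i"
      by (simp only: mult.assoc s2)
    finally show "(2 * real m / 2^j) * c j \<le> (2 * real m / real n) * exp (-20) * (2 / exp 1)^(J - Suc j)"
      unfolding i_def .
  qed simp
  also have "\<dots> = 2 * real m * exp (-20) * (\<Sum>j<J. (2 / exp 1)^(J - Suc j))"
  proof -
    have "(\<Sum>j<J. (2 * real m / real n) * exp (-20) * (2 / exp 1)^(J - Suc j))
        = (2 * real m / real n) * exp (-20) * (\<Sum>j<J. (2 / exp 1)^(J - Suc j))"
      by (simp only: sum_distrib_left)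
    moreover have "real n * ((2 * real m / real n) * exp (-20) * (\<Sum>j<J. (2 / exp 1)^(J - Suc j)))
        = 2 * real m * exp (-20) * (\<Sum>j<J. (2 / exp 1)^(J - Suc j))"
      using n by simp
    ultimately show ?thesis by simp
  qed
  also have "\<dots> \<le> 2 * real m * exp (-20) * 9"
    by (intro mult_left_mono geo_cost_bound) auto
  also have "\<dots> \<le> real m / 10"
  proof -
    have "6 \<le> exp (5::real)" using exp_ge_add_one_self[of 5] by simp
    hence "6^4 \<le> exp (5::real) ^ 4" by (intro power_mono) auto
    also have "exp (5::real) ^ 4 = exp 20" using exp_of_nat_mult[of 4 "5::real"] by simp
    finally have "1296 \<le> exp (20::real)" by simp
    hence "exp (-20::real) \<le> 1/1296" by (simp add: exp_minus field_simps)
    hence "2 * real m * exp (-20) * 9 \<le> 2 * real m * (1/1296) * 9" by (intro mult_right_mono mult_left_mono) auto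
    thus ?thesis by simp
  qed
  finally show ?thesis unfolding c_def R_def .
qed

theorem lemma2p2:
  fixes n :: nat and X :: "nat set"
  assumes "n > 0" and "X \<subseteq> {0..<n}" and "card X > 0"
  shows "\<exists>(col::nat \<Rightarrow> int).
           (\<forall>x\<in>X. col x \<in> {-1, 0, 1}) \<and>
           real (card {x\<in>X. col x \<in> {-1, 1}}) \<ge> real (card X) / 10 \<and>
           (\<forall>A\<in>APs n. \<bar>real_of_int (\<Sum>x\<in>A \<inter> X. col x)\<bar>
               \<le> 200 * sqrt (real (card X)) * sqrt (ln (exp 1 * real n / real (card X))))"
proof -
  note n = assms(1)
  define m where "m = card X"
  have finX: "finite X" using assms(2) by (rule finite_subset) simp
  have mpos: "m > 0" using assms(3) m_def by simp
  have Xlt: "X \<subseteq> {..<n}" using assms(2) by auto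
  have mn: "m \<le> n" using card_mono[OF _ assms(2)] m_def by simp
  obtain J0 where J0: "2^J0 \<le> 2*m" "2*m < 2^(Suc J0)" using ex_power_ivl1[of 2 "2*m"] mpos by auto
  define J where "J = Suc J0"
  have J1: "2*m < 2^J" using J0 J_def by simp
  have J2: "(2::real)^J \<le> 4 * real m"
  proof -
    have "2^J \<le> 4*m" using J0(1) J_def by simp
    hence "real (2^J) \<le> real (4*m)" by (simp only: of_nat_le_iff)
    thus ?thesis by simp
  qed
  define Lg where "Lg = ln (real n / real m)"
  have Lg0: "Lg \<ge> 0" unfolding Lg_def using mn mpos by (intro ln_ge_zero) (simp add: field_simps)
  define Dj where "Dj j = 2 * sqrt (Lg + 20 + real (J - Suc j)) * sqrt (2 * 2^j)" for j :: nat
  define Q where "Q d r j = {q. q * 2^(j+1) + 2^j \<le> rk n X d r (2 * NN n d)}" for d r j :: nat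
  define I where "I = (SIGMA d:{..<n}. SIGMA r:{..<gcd n d}. SIGMA j:{..<J}. Q d r j)"
  have finQ: "finite (Q d r j)" for d r j
  proof (rule finite_subset[of _ "{..rk n X d r (2 * NN n d)}"])
    show "Q d r j \<subseteq> {..rk n X d r (2 * NN n d)}"
    proof
      fix q assume "q \<in> Q d r j"
      hence "q * 2^(j+1) \<le> rk n X d r (2 * NN n d)" unfolding Q_def by simp
      moreover have "q \<le> q * 2^(j+1)" by simp
      ultimately have "q \<le> rk n X d r (2 * NN n d)" by (rule le_trans[rotated])
      thus "q \<in> {..rk n X d r (2 * NN n d)}" by simp
    qed
  qed simp
  have finI: "finite I" unfolding I_def using finQ by (intro finite_SigmaI) auto
  define w :: "nat \<times> nat \<times> nat \<times> nat \<Rightarrow> nat \<Rightarrow> real" where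
    "w i = (case i of (d,r,j,q) \<Rightarrow> wt n X d r j q)" for i
  define V :: "nat \<times> nat \<times> nat \<times> nat \<Rightarrow> real" where
    "V i = (case i of (d,r,j,q) \<Rightarrow> 2 * 2^j)" for i
  define D :: "nat \<times> nat \<times> nat \<times> nat \<Rightarrow> real" where
    "D i = (case i of (d,r,j,q) \<Rightarrow> Dj j)" for i
  have memI: "\<exists>d r j q. i = (d,r,j,q) \<and> d < n \<and> r < gcd n d \<and> j < J \<and> q \<in> Q d r j" if "i \<in> I" for i
    using that unfolding I_def by auto
  have sJ: "Lg + 20 + real (J - Suc j) \<ge> 20" for j using Lg0 by simp
  have Dj2: "(Dj j)^2 = 4 * (Lg + 20 + real (J - Suc j)) * (2 * 2^j)" for j
  proof -
    have "(Dj j)^2 = 4 * (sqrt (Lg + 20 + real (J - Suc j)))^2 * (sqrt (2 * 2^j))^2"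
      unfolding Dj_def by (simp add: power_mult_distrib)
    also have "\<dots> = 4 * (Lg + 20 + real (J - Suc j)) * (2 * 2^j)"
      using sJ[of j] by simp
    finally show ?thesis .
  qed
  have "\<exists>col::nat\<Rightarrow>int. (\<forall>x\<in>X. col x \<in> {-1,0,1}) \<and> real (card {x\<in>X. col x \<noteq> 0}) \<ge> card X / 10
           \<and> (\<forall>i\<in>I. \<bar>\<Sum>x\<in>X. w i x * col x\<bar> \<le> D i)"
  proof (rule partial_coloring[OF finX assms(3) finI])
    show "V i > 0" if "i \<in> I" for i using memI[OF that] unfolding V_def by auto
    show "(\<Sum>x\<in>X. (w i x)^2) \<le> V i" if "i \<in> I" for i
      using memI[OF that] sum_wt_sq[OF n _ finX] unfolding V_def w_def by auto
    show "D i > 0" if iI: "i \<in> I" for i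
    proof -
      obtain d r j q where i: "i = (d,r,j,q)" using memI[OF iI] by blast
      have "Lg + 20 + real (J - Suc j) > 0" using sJ[of j] by linarith
      hence "Dj j > 0" unfolding Dj_def by (intro mult_pos_pos) auto
      thus ?thesis unfolding i D_def by simp
    qed
    show "(D i)^2 \<ge> 80 * V i" if iI: "i \<in> I" for i
    proof -
      obtain d r j q where i: "i = (d,r,j,q)" using memI[OF iI] by blast
      have "80 * (2 * 2^j) \<le> 4 * (Lg + 20 + real (J - Suc j)) * (2 * (2::real)^j)"
        using sJ[of j] by (intro mult_right_mono) auto
      thus ?thesis unfolding i D_def V_def using Dj2[of j] by simp
    qed
    show "(\<Sum>i\<in>I. exp (-((D i)^2 / V i)/4)) \<le> card X / 10"
    proof -
      define h where "h i = (case i of (d,r,j,q) \<Rightarrow> exp (-(Lg + 20 + real (J - Suc j))))" for i :: "nat \<times> nat \<times> nat \<times> nat"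
      have "(\<Sum>i\<in>I. exp (-((D i)^2 / V i)/4)) = (\<Sum>i\<in>I. h i)"
      proof (rule sum.cong[OF refl])
        fix i assume "i \<in> I"
        then obtain d r j q where i: "i = (d,r,j,q)" using memI by blast
        have "(Dj j)^2 / (2 * 2^j) / 4 = Lg + 20 + real (J - Suc j)" unfolding Dj2 by simp
        thus "exp (-((D i)^2 / V i)/4) = h i" unfolding i D_def V_def h_def by simp
      qed
      also have "\<dots> = (\<Sum>d<n. \<Sum>r<gcd n d. \<Sum>j<J. \<Sum>q\<in>Q d r j. h (d,r,j,q))"
        unfolding I_def using finQ by (simp add: sum.Sigma split_def)
      also have "\<dots> = (\<Sum>d<n. \<Sum>r<gcd n d. \<Sum>j<J. \<Sum>q\<in>{q. q * 2^(j+1) + 2^j \<le> rk n X d r (2 * NN n d)}.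
            exp (-(Lg + 20 + real (J - Suc j))))"
        unfolding h_def Q_def by simp
      also have "\<dots> \<le> real m / 10"
        by (rule cost_nested[OF n Xlt m_def mpos mn J1 Lg_def])
      finally show ?thesis unfolding m_def .
    qed
  qed
  then obtain col :: "nat \<Rightarrow> int" where col1: "\<forall>x\<in>X. col x \<in> {-1,0,1}"
    and col2: "real (card {x\<in>X. col x \<noteq> 0}) \<ge> card X / 10"
    and col3: "\<forall>i\<in>I. \<bar>\<Sum>x\<in>X. w i x * col x\<bar> \<le> D i" by blast
  have GGb: "\<bar>real_of_int (GG n X d r col u)\<bar> \<le> (\<Sum>j<J. Dj j)"
    if d: "d < n" and r: "r < gcd n d" and u: "u \<le> rk n X d r (2 * NN n d)" for d r u
  proof -
    have "rk n X d r (2 * NN n d) \<le> (\<Sum>r<gcd n d. rk n X d r (2 * NN n d))"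
      using r by (intro member_le_sum) auto
    also have "\<dots> = 2 * m" using sum_R[OF n Xlt, of d] m_def by simp
    finally have "u < 2^J" using u J1 by linarith
    hence "GG n X d r col u = (\<Sum>j<J. if odd (u div 2^j) then BS n X d r col j (u div 2^(j+1)) else 0)"
      by (rule GG_blocks)
    hence "real_of_int (GG n X d r col u) = (\<Sum>j<J. real_of_int (if odd (u div 2^j) then BS n X d r col j (u div 2^(j+1)) else 0))"
      by simp
    hence "\<bar>real_of_int (GG n X d r col u)\<bar> \<le> (\<Sum>j<J. \<bar>real_of_int (if odd (u div 2^j) then BS n X d r col j (u div 2^(j+1)) else 0)\<bar>)"
      by (simp only: sum_abs)
    also have "\<dots> \<le> (\<Sum>j<J. Dj j)"
    proof (rule sum_mono)
      fix j assume j: "j \<in> {..<J}"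
      show "\<bar>real_of_int (if odd (u div 2^j) then BS n X d r col j (u div 2^(j+1)) else 0)\<bar> \<le> Dj j"
      proof (cases "odd (u div 2^j)")
        case False
        thus ?thesis using sJ[of j] unfolding Dj_def by simp
      next
        case True
        define q where "q = u div 2^(j+1)"
        have "(2::nat)^(j+1) = 2^j * 2" by simp
        hence "u div 2^(j+1) = u div 2^j div 2" by (simp only: div_mult2_eq)
        hence "u div 2^j = 2 * q + 1" using odd_two_times_div_two_succ[OF True] unfolding q_def by simp
        moreover have "u div 2^j * 2^j \<le> u" by (rule div_times_less_eq_dividend)
        ultimately have "(2 * q + 1) * 2^j \<le> u" by simp
        hence "q * 2^(j+1) + 2^j \<le> rk n X d r (2 * NN n d)" using u by (simp add: algebra_simps)
        hence inI: "(d,r,j,q) \<in> I" unfolding I_def Q_def using d r j by auto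
        have "real_of_int (BS n X d r col j q) = (\<Sum>x\<in>X. w (d,r,j,q) x * real_of_int (col x))"
          unfolding w_def using BS_wt[OF finX] by simp
        also have "\<bar>\<dots>\<bar> \<le> D (d,r,j,q)" using col3 inI by blast
        finally show ?thesis using True unfolding q_def D_def by simp
      qed
    qed
    finally show ?thesis .
  qed
  show ?thesis
  proof (intro exI[of _ col] conjI ballI)
    show "col x \<in> {-1,0,1}" if "x \<in> X" for x using col1 that by blast
    have "{x\<in>X. col x \<in> {-1, 1}} = {x\<in>X. col x \<noteq> 0}" using col1 by auto
    thus "real (card {x\<in>X. col x \<in> {-1, 1}}) \<ge> real (card X) / 10" using col2 by simp
    fix A assume "A \<in> APs n"
    then obtain a d l where A: "A = arith_prog n a d l" and a: "a < n" and d: "d < n" and l: "l * gcd n d \<le> n"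
      unfolding APs_def by blast
    obtain r K0 K1 where r: "r < gcd n d" and K: "K0 \<le> K1" "K1 \<le> 2 * NN n d"
      and eq: "(\<Sum>x\<in>arith_prog n a d l \<inter> X. col x) = GG n X d r col (rk n X d r K1) - GG n X d r col (rk n X d r K0)"
      using AP_window[OF n a l, where X=X and col=col] by blast
    have b1: "\<bar>real_of_int (GG n X d r col (rk n X d r K1))\<bar> \<le> (\<Sum>j<J. Dj j)"
      using GGb[OF d r rk_mono[OF K(2)]] .
    have b0: "\<bar>real_of_int (GG n X d r col (rk n X d r K0))\<bar> \<le> (\<Sum>j<J. Dj j)"
      using GGb[OF d r rk_mono[of K0 "2 * NN n d"]] K by linarith
    have "\<bar>real_of_int (\<Sum>x\<in>A \<inter> X. col x)\<bar> \<le> 2 * (\<Sum>j<J. Dj j)"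
      unfolding A eq using b0 b1 by simp
    also have "\<dots> \<le> 2 * (90 * sqrt (real m) * sqrt (1 + Lg))"
      using final_sum_bound[of "real m" Lg J] mpos Lg0 J2 unfolding Dj_def by simp
    also have "\<dots> \<le> 200 * sqrt (real m) * sqrt (1 + Lg)"
    proof -
      have "0 \<le> sqrt (real m) * sqrt (1 + Lg)" using Lg0 by simp
      thus ?thesis by simp
    qed
    also have "1 + Lg = ln (exp 1 * real n / real (card X))"
    proof -
      have e: "exp 1 * real n / real (card X) = exp 1 * (real n / real m)" unfolding m_def by simp
      have "ln (exp 1 * (real n / real m)) = ln (exp 1) + ln (real n / real m)"
        using n mpos by (intro ln_mult_pos) auto
      thus ?thesis unfolding e Lg_def by simp
    qed
    finally show "\<bar>real_of_int (\<Sum>x\<in>A \<inter> X. col x)\<bar> \<le> 200 * sqrt (real (card X)) * sqrt (ln (exp 1 * real n / real (card X)))"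
      unfolding m_def .
  qed
qed

end
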